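(* Let $d \geq 3$ and $1 \leq r < \frac{d}{2}$ be integers, and let $q = e^{2\pi i\tau}$ with $\tau$ in the upper half-plane. Then \[ \mathscr{C}_{d,r}(q) = -q^{-\frac{d}{12} + \frac{r}{2}} \frac{\vartheta\left(\frac12 + r\tau; d\tau\right)}{\eta(d\tau)}\, g_3\left(-q^r; q^d\right). \]
   Context: $C_{d,r}(n)$ counts partitions $\lambda_1 \geq \dots \geq \lambda_k$ of $n$ such that every part is congruent to $0, \pm r \pmod d$, consecutive parts satisfy $\lambda_i - \lambda_{i+1} \geq d$, with $\lambda_i - \lambda_{i+1} > d$ whenever $d \mid \lambda_i$, and the smallest part is larger than $d$; $\mathscr{C}_{d,r}(q) := \sum_{n\geq0} C_{d,r}(n)q^n$ (with $C_{d,r}(0)=1$). Here $q^{a} := e^{2\pi i a\tau}$ for rational $a$; $\eta(\tau) := q^{1/24}\prod_{n \geq 1}(1-q^n)$; $\vartheta(w;\tau) := \sum_{n \in \frac12 + \mathbb{Z}} e^{\pi i n^2 \tau + 2\pi i n (w + \frac12)}$; $(a;q)_n := \prod_{j=0}^{n-1}(1-aq^j)$; and Hickerson's universal mock theta function is $g_3(x;q) := \sum_{n \geq 0} \frac{q^{n(n+1)}}{(x;q)_{n+1}(x^{-1}q;q)_{n+1}}$. *)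

theory Defs
  imports "HOL-Analysis.Analysis"
begin

definition valid_C_partition :: "nat \<Rightarrow> nat \<Rightarrow> nat list \<Rightarrow> bool" where
  "valid_C_partition d r xs \<longleftrightarrow>
     (\<forall>x\<in>set xs. x mod d = 0 \<or> x mod d = r \<or> x mod d = d - r) \<and>
     (\<forall>i. Suc i < length xs \<longrightarrow>
          xs ! Suc i + d \<le> xs ! i \<and> (d dvd xs ! i \<longrightarrow> xs ! Suc i + d < xs ! i)) \<and>
     (xs \<noteq> [] \<longrightarrow> last xs > d)"

definition C_count :: "nat \<Rightarrow> nat \<Rightarrow> nat \<Rightarrow> nat" where
  "C_count d r n = card {xs. sum_list xs = n \<and> valid_C_partition d r xs}"

definition C_gen :: "nat \<Rightarrow> nat \<Rightarrow> complex \<Rightarrow> complex" where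
  "C_gen d r q = (\<Sum>n. of_nat (C_count d r n) * q ^ n)"

text \<open>q^a := exp(2 pi i a tau) for real (rational) a.\<close>
definition qpow :: "complex \<Rightarrow> real \<Rightarrow> complex" where
  "qpow \<tau> a = exp (2 * of_real pi * \<i> * of_real a * \<tau>)"

definition dedekind_eta :: "complex \<Rightarrow> complex" where
  "dedekind_eta \<tau> = qpow \<tau> (1/24) * (\<Prod>n. (1 - qpow \<tau> 1 ^ Suc n))"

definition jtheta :: "complex \<Rightarrow> complex \<Rightarrow> complex" where
  "jtheta w \<tau> = infsum (\<lambda>m::int. let n = (of_int m + 1/2 :: complex) in
      exp (of_real pi * \<i> * n^2 * \<tau> + 2 * of_real pi * \<i> * n * (w + 1/2))) UNIV"

definition qpoch :: "complex \<Rightarrow> complex \<Rightarrow> nat \<Rightarrow> complex" where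
  "qpoch a q n = (\<Prod>j<n. (1 - a * q ^ j))"

definition g3 :: "complex \<Rightarrow> complex \<Rightarrow> complex" where
  "g3 x q = (\<Sum>n. q ^ (n * (n + 1)) / (qpoch x q (n + 1) * qpoch (inverse x * q) q (n + 1)))"

end

theory Submission
  imports Defs
begin

section \<open>Products\<close>

lemma prod_lessThan_add_split:
  fixes f :: "nat \<Rightarrow> 'a::comm_monoid_mult"
  shows "(\<Prod>j<m+n. f j) = (\<Prod>j<m. f j) * (\<Prod>j<n. f (m + j))"
  by (induction n) (simp_all add: ac_simps)

lemma cprod_conv:
  fixes f :: "nat \<Rightarrow> complex"
  assumes "summable (\<lambda>n. norm (f n))"
  shows "convergent_prod (\<lambda>n. 1 + f n)"
  by (rule abs_convergent_prod_imp_convergent_prod, rule summable_imp_abs_convergent_prod) (simp add: assms)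

lemma cprod_bound:
  fixes f :: "nat \<Rightarrow> complex"
  assumes s: "summable (\<lambda>n. norm (f n))"
  shows "norm ((\<Prod>n. 1 + f n) - 1) \<le> exp (\<Sum>n. norm (f n)) - 1"
proof -
  have lim: "(\<lambda>n. \<Prod>i\<le>n. 1 + f i) \<longlonglongrightarrow> (\<Prod>n. 1 + f n)"
    by (rule convergent_prod_LIMSEQ[OF cprod_conv[OF s]])
  have b: "norm ((\<Prod>i\<le>n. 1 + f i) - 1) \<le> exp (\<Sum>n. norm (f n)) - 1" for n
  proof -
    have "norm ((\<Prod>i\<le>n. 1 + f i) - 1) \<le> (\<Prod>i\<le>n. 1 + norm (f i)) - 1"
      by (rule norm_prod_minus1_le_prod_minus1)
    also have "\<dots> \<le> exp (\<Sum>i\<le>n. norm (f i)) - 1"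
      using prod_le_exp_sum[of "{..n}" "\<lambda>i. norm (f i)"] by simp
    also have "\<dots> \<le> exp (\<Sum>n. norm (f n)) - 1"
      using sum_le_suminf[OF s, of "{..n}"] by simp
    finally show ?thesis .
  qed
  show ?thesis
    by (rule LIMSEQ_le_const2[OF tendsto_norm[OF tendsto_diff[OF lim tendsto_const]]]) (use b in auto)
qed

lemma cprod_bound':
  fixes f :: "nat \<Rightarrow> complex"
  assumes s: "summable (\<lambda>n. norm (f n))"
  shows "norm (\<Prod>n. 1 + f n) \<le> exp (\<Sum>n. norm (f n))"
proof -
  have "norm (\<Prod>n. 1 + f n) \<le> norm ((\<Prod>n. 1 + f n) - 1) + 1"
    by (metis add.commute diff_add_cancel norm_one norm_triangle_ineq)
  then show ?thesis using cprod_bound[OF s] by simp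
qed

lemma qpoch_0 [simp]: "qpoch a q 0 = 1"
  by (simp add: qpoch_def)

lemma pw_lt1: "0 \<le> \<rho> \<Longrightarrow> \<rho> < 1 \<Longrightarrow> \<rho> * \<rho> ^ j < (1::real)"
proof -
  assume h: "0 \<le> \<rho>" "\<rho> < 1"
  have "\<rho> ^ j \<le> 1" using h by (simp add: power_le_one)
  then have "\<rho> * \<rho> ^ j \<le> \<rho>" using h by (simp add: mult_left_le)
  then show ?thesis using h by simp
qed

lemma qpoch_Suc: "qpoch a q (Suc n) = qpoch a q n * (1 - a * q ^ n)"
  by (simp add: qpoch_def)

lemma qpoch_Suc': "qpoch a q (Suc n) = (1 - a) * qpoch (a * q) q n"
  unfolding qpoch_def by (subst prod.lessThan_Suc_shift) (simp add: mult.assoc)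

lemma qpoch_upper:
  fixes Q x :: complex
  assumes "norm Q < 1"
  shows "norm (qpoch x Q n) \<le> exp (norm x / (1 - norm Q))"
proof -
  have "norm (qpoch x Q n) = (\<Prod>j<n. norm (1 - x * Q ^ j))"
    by (simp add: qpoch_def prod_norm)
  also have "\<dots> \<le> (\<Prod>j<n. 1 + norm x * norm Q ^ j)"
    by (intro prod_mono conjI) (auto intro: order.trans[OF norm_triangle_ineq4] simp: norm_mult norm_power)
  also have "\<dots> \<le> exp (\<Sum>j<n. norm x * norm Q ^ j)"
    by (rule prod_le_exp_sum) simp
  also have "(\<Sum>j<n. norm x * norm Q ^ j) \<le> (\<Sum>j. norm x * norm Q ^ j)"
    by (intro sum_le_suminf summable_mult summable_geometric) (auto simp: assms)
  also have "(\<Sum>j. norm x * norm Q ^ j) = norm x / (1 - norm Q)"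
    using suminf_geometric[of "norm Q"] assms by (simp add: suminf_mult divide_simps)
  finally show ?thesis by simp
qed

lemma qpoch_QQ_nonzero:
  fixes Q :: complex assumes "norm Q < 1" shows "qpoch Q Q n \<noteq> 0"
proof -
  have "Q * Q ^ j \<noteq> 1" for j
  proof
    assume "Q * Q ^ j = 1"
    then have "norm (Q ^ Suc j) = 1" by simp
    moreover have "norm (Q ^ Suc j) < 1"
      using pw_lt1[of "norm Q" j] assms by (simp add: norm_power norm_mult)
    ultimately show False by simp
  qed
  then show ?thesis by (auto simp: qpoch_def)
qed

lemma qpoch_QQ_lower:
  fixes Q :: complex
  assumes Q: "norm Q < 1"
  obtains c where "c > 0" "\<And>n. c \<le> norm (qpoch Q Q n)"
proof -
  define \<rho> where "\<rho> = norm Q"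
  have \<rho>: "0 \<le> \<rho>" "\<rho> < 1" using Q by (auto simp: \<rho>_def)
  define g where "g j = 1 - \<rho> ^ Suc j" for j
  have gpos: "g j > 0" for j using pw_lt1[OF \<rho>] by (simp add: g_def)
  have sg: "summable (\<lambda>j. norm (g j - 1))"
    using \<rho> by (simp add: g_def summable_mult summable_geometric)
  have cg: "convergent_prod g"
    by (rule abs_convergent_prod_imp_convergent_prod, rule summable_imp_abs_convergent_prod) (use sg in auto)
  have pos: "0 < prodinf g" by (rule less_0_prodinf[OF cg gpos])
  have le: "prodinf g \<le> prod g {..<n}" for n
    by (rule prod_ge_prodinf) (use cg gpos \<rho> in \<open>auto simp: g_def convergent_prod_has_prod less_imp_le\<close>)
  have le2: "prod g {..<n} \<le> norm (qpoch Q Q n)" for n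
  proof -
    have "prod g {..<n} \<le> (\<Prod>j<n. norm (1 - Q * Q ^ j))"
    proof (intro prod_mono conjI)
      fix j assume "j \<in> {..<n}"
      show "0 \<le> g j" using gpos[of j] by simp
      have "1 - norm (Q * Q ^ j) \<le> norm (1 - Q * Q ^ j)"
        by (metis norm_one norm_triangle_ineq2)
      then show "g j \<le> norm (1 - Q * Q ^ j)"
        by (simp add: g_def \<rho>_def norm_mult norm_power)
    qed
    also have "\<dots> = norm (qpoch Q Q n)" by (simp add: qpoch_def prod_norm)
    finally show ?thesis .
  qed
  show ?thesis by (rule that[of "prodinf g"]) (use pos le le2 order.trans in blast)+
qed

section \<open>q-binomial\<close>

definition qbin :: "complex \<Rightarrow> nat \<Rightarrow> nat \<Rightarrow> complex" where
  "qbin Q N j = (if j \<le> N then qpoch Q Q N / (qpoch Q Q j * qpoch Q Q (N - j)) else 0)"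

lemma qbin_0 [simp]: "norm Q < 1 \<Longrightarrow> qbin Q N 0 = 1"
  by (simp add: qbin_def qpoch_QQ_nonzero)

lemma qbin_diag [simp]: "norm Q < 1 \<Longrightarrow> qbin Q N N = 1"
  by (simp add: qbin_def qpoch_QQ_nonzero)

lemma qbin_gt [simp]: "N < j \<Longrightarrow> qbin Q N j = 0"
  by (simp add: qbin_def)

lemma qbin_pascal:
  assumes Q: "norm Q < 1"
  shows "qbin Q (Suc N) (Suc j) = qbin Q N (Suc j) + Q ^ (N - j) * qbin Q N j"
proof (cases "j < N")
  case True
  then obtain m where N: "N = j + Suc m" by (metis add_Suc_right less_imp_Suc_add)
  have nz: "qpoch Q Q n \<noteq> 0" for n using qpoch_QQ_nonzero[OF Q] .
  have f1: "1 - Q * Q ^ k \<noteq> 0" for k using nz[of "Suc k"] by (simp add: qpoch_Suc)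
  have e1: "Suc N - Suc j = Suc m" "N - Suc j = m" "N - j = Suc m" using N by auto
  have "qbin Q (Suc N) (Suc j) = qpoch Q Q N * (1 - Q * Q ^ N) /
      (qpoch Q Q j * (1 - Q * Q ^ j) * (qpoch Q Q m * (1 - Q * Q ^ m)))"
    using N by (simp add: qbin_def e1 qpoch_Suc)
  also have "\<dots> = qpoch Q Q N / (qpoch Q Q j * (1 - Q * Q ^ j) * qpoch Q Q m)
     + (Q * Q ^ m) * (qpoch Q Q N / (qpoch Q Q j * (qpoch Q Q m * (1 - Q * Q ^ m))))"
  proof -
    have hQ: "Q * Q ^ N = (Q * Q ^ m) * (Q * Q ^ j)" unfolding N by (simp add: power_add algebra_simps)
    have gen: "F * (a + b - a * b) / (A * a * (B * b)) = F / (A * a * B) + w * (F / (A * (B * b)))"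
      if "A \<noteq> 0" "B \<noteq> 0" "a \<noteq> 0" "b \<noteq> 0" "w = 1 - b" for F A B a b w :: complex
      using that(1-4) unfolding that(5) by (simp add: field_simps)
    have hQ': "1 - Q*Q^N = (1 - Q*Q^j) + (1 - Q*Q^m) - (1-Q*Q^j)*(1-Q*Q^m)" using hQ by (auto simp: algebra_simps)
    show ?thesis
      apply (subst hQ')
      apply (rule gen)
      using nz f1 by auto
  qed
  also have "\<dots> = qbin Q N (Suc j) + Q ^ (N - j) * qbin Q N j"
    using N by (simp add: qbin_def e1 qpoch_Suc)
  finally show ?thesis .
next
  case False
  then show ?thesis using Q by (cases "j = N") auto
qed

lemma qbin_theorem:
  fixes Q x y :: complex
  assumes Q: "norm Q < 1"
  shows "(\<Prod>j<N. y + x * Q ^ j) = (\<Sum>i\<le>N. qbin Q N i * Q ^ (i * (i - 1) div 2) * x ^ i * y ^ (N - i))"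
proof (induction N)
  case 0
  then show ?case using Q by simp
next
  case (Suc N)
  define c where "c N i = qbin Q N i * Q ^ (i * (i - 1) div 2) * x ^ i" for N i
  have IH: "(\<Prod>j<N. y + x * Q ^ j) = (\<Sum>i\<le>N. c N i * y ^ (N - i))"
    using Suc by (simp add: c_def)
  have tri: "Suc i * (Suc i - 1) div 2 = i * (i - 1) div 2 + i" for i :: nat
  proof -
    have "Suc i * i = i * (i - 1) + 2 * i" by (cases i) (simp_all add: algebra_simps)
    moreover have "even (i * (i - 1))" by auto
    ultimately show ?thesis by auto
  qed
  have cstep: "c (Suc N) (Suc i) = c N (Suc i) + x * Q ^ N * c N i" if "i \<le> N" for i
  proof -
    have e: "(N - i) + Suc i * (Suc i - 1) div 2 = N + i*(i-1) div 2" using that tri[of i] by simp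
    have "Q ^ (N - i) * Q ^ (Suc i * (Suc i - 1) div 2) = Q ^ N * Q ^ (i * (i - 1) div 2)"
      by (simp only: power_add[symmetric] e)
    then show ?thesis
      by (simp add: c_def qbin_pascal[OF Q] algebra_simps)
  qed
  have c0: "c M 0 = 1" for M using Q by (simp add: c_def)
  have cN: "c N (Suc N) = 0" by (simp add: c_def)
  have "(\<Sum>i\<le>Suc N. c (Suc N) i * y ^ (Suc N - i))
      = y ^ Suc N + (\<Sum>i\<le>N. c (Suc N) (Suc i) * y ^ (N - i))"
    by (subst sum.atMost_Suc_shift) (simp add: c0)
  also have "\<dots> = y ^ Suc N + (\<Sum>i\<le>N. c N (Suc i) * y ^ (N - i)) + x * Q ^ N * (\<Sum>i\<le>N. c N i * y ^ (N - i))"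
    by (simp add: cstep sum.distrib sum_distrib_left algebra_simps)
  also have "y ^ Suc N + (\<Sum>i\<le>N. c N (Suc i) * y ^ (N - i)) = y * (\<Sum>i\<le>N. c N i * y ^ (N - i))"
  proof -
    have "(\<Sum>i\<le>N. c N i * y ^ (N - i)) = y ^ N + (\<Sum>i<N. c N (Suc i) * y ^ (N - Suc i))"
      by (subst sum.atMost_shift) (simp add: c0)
    moreover have "(\<Sum>i\<le>N. c N (Suc i) * y ^ (N - i)) = (\<Sum>i<N. c N (Suc i) * y ^ (N - i))"
      by (simp add: lessThan_Suc_atMost[symmetric] cN)
    moreover have yy: "y * y ^ (N - Suc i) = y ^ (N - i)" if "i < N" for i
      using that by (metis Suc_diff_Suc power_Suc)
    moreover have "(\<Sum>i<N. y * (c N (Suc i) * y ^ (N - Suc i))) = (\<Sum>i<N. c N (Suc i) * y ^ (N - i))"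
      by (rule sum.cong) (auto simp: yy[symmetric] algebra_simps)
    ultimately show ?thesis by (simp add: sum_distrib_left algebra_simps)
  qed
  finally have "(\<Sum>i\<le>Suc N. c (Suc N) i * y ^ (Suc N - i)) = (y + x * Q ^ N) * (\<Prod>j<N. y + x * Q ^ j)"
    by (simp add: IH algebra_simps)
  then show ?case by (simp add: c_def mult.commute)
qed

fun tr :: "nat \<Rightarrow> nat" where "tr 0 = 0" | "tr (Suc i) = tr i + i"

lemma tr2: "2 * tr i = i * (i - 1)"
proof (induction i)
  case (Suc i) then show ?case by (cases i) (simp_all add: algebra_simps)
qed simp

lemma tr_eq: "tr i = i * (i - 1) div 2"
  using tr2[of i] by simp

lemma real_tr: "real (tr i) = real i * (real i - 1) / 2"
  by (induction i) (simp_all add: field_simps)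

lemma sum_tr: "(\<Sum>s<n. s) = tr n"
  by (induction n) simp_all

lemma sum_lessThan_add_split:
  fixes f :: "nat \<Rightarrow> 'a::comm_monoid_add"
  shows "(\<Sum>i<m+n. f i) = (\<Sum>i<m. f i) + (\<Sum>k<n. f (m + k))"
  by (induction n) (simp_all add: ac_simps)

lemma qbin_theorem_tr:
  fixes Q x y :: complex
  assumes Q: "norm Q < 1"
  shows "(\<Prod>j<N. y + x * Q ^ j) = (\<Sum>i\<le>N. qbin Q N i * Q ^ tr i * x ^ i * y ^ (N - i))"
  using qbin_theorem[OF Q] by (simp add: tr_eq)

definition ex :: "nat \<Rightarrow> nat \<Rightarrow> nat" where
  "ex n i = (if n \<le> i then tr (i - n + 1) else tr (n - i))"

lemma ex_id:
  assumes "n = Suc p" "i \<le> 2*n"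
  shows "tr i + p*(2*n - i) = ex n i + (tr n + p*n)"
proof -
  have "real (tr i + p*(2*n - i)) = real (ex n i + (tr n + p*n))"
  proof (cases "n \<le> i")
    case True
    have e1: "real (i - n + 1) = real i - real n + 1" using True by (simp add: of_nat_diff)
    have e2: "real (2*n - i) = 2 * real n - real i" using assms by (simp add: of_nat_diff)
    show ?thesis using True assms
      by (simp add: ex_def real_tr e1 e2 of_nat_diff) (simp add: field_simps)
  next
    case False
    have e1: "real (n - i) = real n - real i" using False by (simp add: of_nat_diff)
    have e2: "real (2*n - i) = 2 * real n - real i" using assms by (simp add: of_nat_diff)
    show ?thesis using False assms
      by (simp add: ex_def real_tr e1 e2) (simp add: field_simps)
  qed
  then show ?thesis by (simp only: of_nat_eq_iff)
qed

lemma jtp_fin_nat: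
  fixes Q z :: complex
  assumes Q: "norm Q < 1" "Q \<noteq> 0"
  shows "(\<Prod>t<n. 1 + z*Q^(Suc t)) * (\<Prod>s<n. z + Q^s) = (\<Sum>i\<le>2*n. qbin Q (2*n) i * Q^(ex n i) * z^i)"
proof (cases n)
  case 0
  then show ?thesis using Q by (simp add: ex_def)
next
  case (Suc p)
  have bin: "(\<Prod>j<2*n. Q^p + z*Q^j) = (\<Sum>i\<le>2*n. qbin Q (2*n) i * Q^(tr i) * z^i * (Q^p)^(2*n-i))"
    by (rule qbin_theorem_tr[OF Q(1)])
  have split: "(\<Prod>j<2*n. Q^p + z*Q^j) = (\<Prod>j<n. Q^p + z*Q^j) * (\<Prod>t<n. Q^p + z*Q^(n+t))"
    using prod_lessThan_add_split[of "\<lambda>j. Q^p + z*Q^j" n n] by (simp add: mult_2)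
  have p2: "(\<Prod>t<n. Q^p + z*Q^(n+t)) = Q^(p*n) * (\<Prod>t<n. 1 + z*Q^(Suc t))"
  proof -
    have "Q^p + z*Q^(n+t) = Q^p * (1 + z*Q^(Suc t))" for t using Suc by (simp add: power_add algebra_simps)
    then show ?thesis by (simp add: prod.distrib power_mult)
  qed
  have p1: "(\<Prod>j<n. Q^p + z*Q^j) = Q^(tr n) * (\<Prod>s<n. z + Q^s)"
  proof -
    have "(\<Prod>j<n. Q^p + z*Q^j) = (\<Prod>s<n. Q^p + z*Q^(n - Suc s))"
      by (rule prod.nat_diff_reindex[symmetric])
    also have "\<dots> = (\<Prod>s<n. Q^(n - Suc s) * (z + Q^s))"
    proof (rule prod.cong)
      fix s assume "s \<in> {..<n}"
      then have "Q^p = Q^(n - Suc s) * Q^s" using Suc by (simp add: power_add[symmetric])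
      then show "Q^p + z*Q^(n - Suc s) = Q^(n - Suc s) * (z + Q^s)" by (simp add: algebra_simps)
    qed simp
    also have "\<dots> = Q^(\<Sum>s<n. n - Suc s) * (\<Prod>s<n. z + Q^s)"
      by (simp add: prod.distrib power_sum)
    also have "(\<Sum>s<n. n - Suc s) = tr n"
      using sum.nat_diff_reindex[of "\<lambda>s. s" n] by (simp add: sum_tr)
    finally show ?thesis .
  qed
  have rhs: "(\<Sum>i\<le>2*n. qbin Q (2*n) i * Q^(tr i) * z^i * (Q^p)^(2*n-i))
      = Q^(tr n + p*n) * (\<Sum>i\<le>2*n. qbin Q (2*n) i * Q^(ex n i) * z^i)"
    unfolding sum_distrib_left
  proof (rule sum.cong)
    fix i assume "i \<in> {..2*n}"
    then have "tr i + p*(2*n - i) = ex n i + (tr n + p*n)" using ex_id[OF Suc] by simp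
    then have "Q^(tr i) * (Q^p)^(2*n-i) = Q^(tr n + p*n) * Q^(ex n i)"
      by (simp add: power_mult[symmetric] power_add[symmetric] add.commute)
    then show "qbin Q (2*n) i * Q^(tr i) * z^i * (Q^p)^(2*n-i) = Q^(tr n + p*n) * (qbin Q (2*n) i * Q^(ex n i) * z^i)"
      by (simp add: algebra_simps)
  qed simp
  have "Q^(tr n + p*n) * ((\<Prod>t<n. 1 + z*Q^(Suc t)) * (\<Prod>s<n. z + Q^s))
      = Q^(tr n + p*n) * (\<Sum>i\<le>2*n. qbin Q (2*n) i * Q^(ex n i) * z^i)"
    using bin split p1 p2 rhs by (simp add: power_add algebra_simps)
  then show ?thesis using Q(2) by simp
qed

lemma jtp_fin:
  fixes Q z :: complex
  assumes Q: "norm Q < 1" "Q \<noteq> 0" and z: "z \<noteq> 0"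
  shows "(\<Prod>t<n. 1 + z*Q^(Suc t)) * (\<Prod>s<n. 1 + inverse z * Q^s) =
     (\<Sum>k\<le>n. qbin Q (2*n) (n+k) * Q^(tr (Suc k)) * z^k)
     + (\<Sum>k<n. qbin Q (2*n) (n - Suc k) * Q^(tr (Suc k)) * inverse z ^ Suc k)"
proof -
  define f where "f i = qbin Q (2*n) i * Q^(ex n i) * z^i" for i
  have A: "(\<Prod>s<n. z + Q^s) = z^n * (\<Prod>s<n. 1 + inverse z * Q^s)"
  proof -
    have "z + Q^s = z * (1 + inverse z * Q^s)" for s using z by (simp add: field_simps)
    then show ?thesis by (simp add: prod.distrib)
  qed
  have S: "(\<Sum>i\<le>2*n. f i) = (\<Sum>k<n. f (n - Suc k)) + (\<Sum>k\<le>n. f (n+k))"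
  proof -
    have "(\<Sum>i\<le>2*n. f i) = (\<Sum>i<n + Suc n. f i)"
      by (simp add: lessThan_Suc_atMost[symmetric] mult_2)
    also have "\<dots> = (\<Sum>i<n. f i) + (\<Sum>k<Suc n. f (n+k))" by (rule sum_lessThan_add_split)
    also have "(\<Sum>i<n. f i) = (\<Sum>k<n. f (n - Suc k))" by (rule sum.nat_diff_reindex[symmetric])
    finally show ?thesis by (simp add: lessThan_Suc_atMost)
  qed
  have t1: "f (n+k) = z^n * (qbin Q (2*n) (n+k) * Q^(tr (Suc k)) * z^k)" for k
    by (simp add: f_def ex_def power_add algebra_simps)
  have t2: "f (n - Suc k) = z^n * (qbin Q (2*n) (n - Suc k) * Q^(tr (Suc k)) * inverse z ^ Suc k)" if "k < n" for k
  proof -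
    have e: "ex n (n - Suc k) = tr (Suc k)" using that by (simp add: ex_def Suc_diff_Suc)
    have nn: "n = (n - Suc k) + Suc k" using that by simp
    have "z^n = z^(n - Suc k) * z^(Suc k)" by (subst nn, subst power_add) simp
    then have "z^(n - Suc k) = z^n * inverse z ^ Suc k" using z by (simp add: field_simps power_inverse)
    then show ?thesis by (simp add: f_def e algebra_simps)
  qed
  have "z^n * ((\<Prod>t<n. 1 + z*Q^(Suc t)) * (\<Prod>s<n. 1 + inverse z * Q^s))
      = z^n * ((\<Sum>k\<le>n. qbin Q (2*n) (n+k) * Q^(tr (Suc k)) * z^k)
     + (\<Sum>k<n. qbin Q (2*n) (n - Suc k) * Q^(tr (Suc k)) * inverse z ^ Suc k))"
  proof -
    have "z^n * ((\<Prod>t<n. 1 + z*Q^(Suc t)) * (\<Prod>s<n. 1 + inverse z * Q^s))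
        = (\<Prod>t<n. 1 + z*Q^(Suc t)) * (\<Prod>s<n. z + Q^s)" by (simp add: A algebra_simps)
    also have "\<dots> = (\<Sum>i\<le>2*n. f i)" unfolding f_def by (rule jtp_fin_nat[OF Q])
    also have "\<dots> = (\<Sum>k<n. f (n - Suc k)) + (\<Sum>k\<le>n. f (n+k))" by (rule S)
    also have "\<dots> = z^n * ((\<Sum>k\<le>n. qbin Q (2*n) (n+k) * Q^(tr (Suc k)) * z^k)
     + (\<Sum>k<n. qbin Q (2*n) (n - Suc k) * Q^(tr (Suc k)) * inverse z ^ Suc k))"
      by (simp add: t1 t2 sum_distrib_left distrib_left)
    finally show ?thesis .
  qed
  then show ?thesis using z by simp
qed

section \<open>Limits\<close>

definition qinf :: "complex \<Rightarrow> complex" where "qinf Q = (\<Prod>j. 1 - Q ^ Suc j)"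

lemma pow_Suc_lt1: "norm (Q::complex) < 1 \<Longrightarrow> norm (Q ^ Suc j) < 1"
  using pw_lt1[of "norm Q" j] by (simp add: norm_power norm_mult)

lemma summable_geo_Suc: "norm (Q::complex) < 1 \<Longrightarrow> summable (\<lambda>j. norm Q ^ Suc j)"
  by (simp add: summable_mult summable_geometric)

lemma qinf_conv: "norm (Q::complex) < 1 \<Longrightarrow> convergent_prod (\<lambda>j. 1 - Q ^ Suc j)"
  using cprod_conv[of "\<lambda>j. - (Q ^ Suc j)"] summable_geo_Suc[of Q]
  by (simp add: norm_power norm_mult del: power_Suc)

lemma qpoch_QQ_eq: "qpoch Q Q m = (\<Prod>j<m. 1 - Q ^ Suc j)"
  by (simp add: qpoch_def)

lemma qpoch_lim: "norm Q < 1 \<Longrightarrow> (\<lambda>m. qpoch Q Q m) \<longlonglongrightarrow> qinf Q"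
  unfolding qpoch_QQ_eq qinf_def
  using convergent_prod_LIMSEQ[OF qinf_conv] LIMSEQ_lessThan_iff_atMost by blast

lemma qinf_nz: "norm Q < 1 \<Longrightarrow> qinf Q \<noteq> 0"
  unfolding qinf_def
proof (rule prodinf_nonzero[OF qinf_conv])
  fix i assume "norm Q < 1"
  then have "norm (Q ^ Suc i) < 1" by (rule pow_Suc_lt1)
  then show "1 - Q ^ Suc i \<noteq> 0" by auto
qed

lemma seq_comp: "f \<longlonglongrightarrow> L \<Longrightarrow> filterlim g at_top sequentially \<Longrightarrow> (\<lambda>n. f (g n)) \<longlonglongrightarrow> L"
  by (rule filterlim_compose)

lemma fl_add: "filterlim (\<lambda>n::nat. n + k) at_top sequentially"
  unfolding filterlim_at_top eventually_sequentially
proof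
  fix Z :: nat show "\<exists>N. \<forall>n\<ge>N. Z \<le> n + k" by (rule exI[of _ Z]) auto
qed

lemma fl_sub: "filterlim (\<lambda>n::nat. n - k) at_top sequentially"
  unfolding filterlim_at_top eventually_sequentially
proof
  fix Z :: nat show "\<exists>N. \<forall>n\<ge>N. Z \<le> n - k" by (rule exI[of _ "Z + k"]) auto
qed

lemma fl_dbl: "filterlim (\<lambda>n::nat. 2 * n) at_top sequentially"
  unfolding filterlim_at_top eventually_sequentially
proof
  fix Z :: nat show "\<exists>N. \<forall>n\<ge>N. Z \<le> 2 * n" by (rule exI[of _ Z]) auto
qed

lemma qbin_lim1:
  assumes Q: "norm Q < 1"
  shows "(\<lambda>n. qbin Q (2*n) (n+k)) \<longlonglongrightarrow> 1 / qinf Q"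
proof -
  have "(\<lambda>n. qpoch Q Q (2*n) / (qpoch Q Q (n+k) * qpoch Q Q (n-k))) \<longlonglongrightarrow> qinf Q / (qinf Q * qinf Q)"
    by (intro tendsto_intros seq_comp[OF qpoch_lim[OF Q]] fl_add fl_sub fl_dbl) (use qinf_nz[OF Q] in auto)
  moreover have "eventually (\<lambda>n. qpoch Q Q (2*n) / (qpoch Q Q (n+k) * qpoch Q Q (n-k)) = qbin Q (2*n) (n+k)) sequentially"
    unfolding eventually_sequentially
    by (rule exI[of _ k]) (auto simp: qbin_def)
  ultimately show ?thesis using qinf_nz[OF Q] by (simp add: Lim_transform_eventually)
qed

lemma qbin_lim2:
  assumes Q: "norm Q < 1"
  shows "(\<lambda>n. qbin Q (2*n) (n - Suc k)) \<longlonglongrightarrow> 1 / qinf Q"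
proof -
  have "(\<lambda>n. qpoch Q Q (2*n) / (qpoch Q Q (n - Suc k) * qpoch Q Q (n + Suc k))) \<longlonglongrightarrow> qinf Q / (qinf Q * qinf Q)"
    by (intro tendsto_intros seq_comp[OF qpoch_lim[OF Q]] fl_add fl_sub fl_dbl) (use qinf_nz[OF Q] in auto)
  moreover have "eventually (\<lambda>n. qpoch Q Q (2*n) / (qpoch Q Q (n - Suc k) * qpoch Q Q (n + Suc k)) = qbin Q (2*n) (n - Suc k)) sequentially"
    unfolding eventually_sequentially
  proof (rule exI[of _ "Suc k"], intro allI impI)
    fix n assume "Suc k \<le> n"
    then have "2*n - (n - Suc k) = n + Suc k" by simp
    then show "qpoch Q Q (2*n) / (qpoch Q Q (n - Suc k) * qpoch Q Q (n + Suc k)) = qbin Q (2*n) (n - Suc k)"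
      by (simp add: qbin_def)
  qed
  ultimately show ?thesis using qinf_nz[OF Q] by (simp add: Lim_transform_eventually)
qed

lemma qbin_bound:
  assumes Q: "norm Q < 1"
  obtains B where "B \<ge> 0" "\<And>N j. norm (qbin Q N j) \<le> B"
proof -
  obtain c where c: "c > 0" "\<And>n. c \<le> norm (qpoch Q Q n)" using qpoch_QQ_lower[OF Q] by blast
  define E where "E = exp (norm Q / (1 - norm Q))"
  have E: "norm (qpoch Q Q n) \<le> E" for n unfolding E_def by (rule qpoch_upper[OF Q])
  have E0: "0 \<le> E" unfolding E_def by simp
  have "norm (qbin Q N j) \<le> E / (c * c)" for N j
  proof (cases "j \<le> N")
    case True
    have "norm (qbin Q N j) = norm (qpoch Q Q N) / (norm (qpoch Q Q j) * norm (qpoch Q Q (N - j)))"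
      using True by (simp add: qbin_def norm_divide norm_mult)
    also have "\<dots> \<le> E / (c * c)"
      by (intro frac_le mult_mono E) (use c E0 in \<open>auto intro: mult_pos_pos\<close>)
    finally show ?thesis .
  next
    case False
    then show ?thesis using c E0 by simp
  qed
  moreover have "E / (c * c) \<ge> 0" using c E0 by simp

  ultimately show ?thesis using that by blast
qed

lemma summable_tr:
  fixes \<rho> c :: real
  assumes "0 \<le> \<rho>" "\<rho> < 1" "0 \<le> c"
  shows "summable (\<lambda>k. \<rho> ^ tr (Suc k) * c ^ k)"
proof -
  have "(\<lambda>n. \<rho> ^ n * c) \<longlonglongrightarrow> 0"
    by (intro tendsto_mult_left_zero LIMSEQ_power_zero) (use assms in auto)
  then have "eventually (\<lambda>n. \<rho> ^ n * c < 1/2) sequentially"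
    by (rule order_tendstoD) simp
  then obtain N where N: "\<And>n. n \<ge> N \<Longrightarrow> \<rho> ^ n * c < 1/2" unfolding eventually_sequentially by blast
  show ?thesis
  proof (rule summable_ratio_test[of "1/2" N])
    fix n assume n: "N \<le> n"
    define Y where "Y = \<rho> ^ Suc n * c"
    define X where "X = \<rho> ^ tr (Suc n) * c ^ n"
    have Y: "Y < 1/2" "0 \<le> Y" using N[of "Suc n"] n assms by (auto simp: Y_def)
    have X: "0 \<le> X" using assms by (simp add: X_def)
    have eq: "\<rho> ^ tr (Suc (Suc n)) * c ^ Suc n = Y * X"
      by (simp add: X_def Y_def power_add algebra_simps)
    have "Y * X \<le> 1/2 * X" using mult_right_mono[of Y "1/2" X] Y X by simp
    then show "norm (\<rho> ^ tr (Suc (Suc n)) * c ^ Suc n) \<le> 1/2 * norm (\<rho> ^ tr (Suc n) * c ^ n)"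
      unfolding eq X_def[symmetric] using X Y by simp
  qed simp
qed

lemma jtp_summable1:
  "norm (Q::complex) < 1 \<Longrightarrow> summable (\<lambda>k. norm (Q^(tr (Suc k)) * z^k))"
  using summable_tr[of "norm Q" "norm z"] by (simp add: norm_mult norm_power)

lemma jtp_summable2:
  "norm (Q::complex) < 1 \<Longrightarrow> summable (\<lambda>k. norm (Q^(tr (Suc k)) * w ^ Suc k))"
  using summable_mult[OF summable_tr[of "norm Q" "norm w"], of "norm w"]
  by (simp add: norm_mult norm_power algebra_simps)

theorem jtp:
  fixes Q z :: complex
  assumes Q: "norm Q < 1" "Q \<noteq> 0" and z: "z \<noteq> 0"
  shows "qinf Q * ((\<Prod>t. 1 + z*Q^(Suc t)) * (\<Prod>s. 1 + inverse z * Q^s))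
       = (\<Sum>k. Q^(tr (Suc k)) * z^k) + (\<Sum>k. Q^(tr (Suc k)) * inverse z ^ Suc k)"
proof -
  obtain B where B: "B \<ge> 0" "\<And>N j. norm (qbin Q N j) \<le> B" using qbin_bound[OF Q(1)] by blast
  define a where "a k n = (if k \<le> n then qbin Q (2*n) (n+k) * Q^(tr (Suc k)) * z^k else 0)" for k n
  define b where "b k n = (if k < n then qbin Q (2*n) (n - Suc k) * Q^(tr (Suc k)) * inverse z ^ Suc k else 0)" for k n
  have ta: "(\<lambda>n. \<Sum>k. a k n) \<longlonglongrightarrow> (\<Sum>k. 1 / qinf Q * (Q^(tr (Suc k)) * z^k))"
  proof (rule tannerys_theorem[THEN conjunct2, THEN conjunct2])
    fix k
    have "(\<lambda>n. qbin Q (2*n) (n+k) * (Q^(tr (Suc k)) * z^k)) \<longlonglongrightarrow> 1 / qinf Q * (Q^(tr (Suc k)) * z^k)"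
      by (intro tendsto_intros qbin_lim1[OF Q(1)])
    moreover have "eventually (\<lambda>n. qbin Q (2*n) (n+k) * (Q^(tr (Suc k)) * z^k) = a k n) sequentially"
      unfolding eventually_sequentially by (rule exI[of _ k]) (auto simp: a_def)
    ultimately show "(\<lambda>n. a k n) \<longlonglongrightarrow> 1 / qinf Q * (Q^(tr (Suc k)) * z^k)"
      by (rule Lim_transform_eventually)
  next
    have "norm (a k n) \<le> B * norm (Q^(tr (Suc k)) * z^k)" for k n
    proof (cases "k \<le> n")
      case True
      then have "norm (a k n) = norm (qbin Q (2*n) (n+k)) * norm (Q^(tr (Suc k)) * z^k)"
        by (simp add: a_def norm_mult mult.assoc)
      also have "\<dots> \<le> B * norm (Q^(tr (Suc k)) * z^k)" by (intro mult_right_mono B) simp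
      finally show ?thesis .
    qed (use B in \<open>simp add: a_def\<close>)
    then show "eventually (\<lambda>(k,n). norm (a k n) \<le> B * norm (Q^(tr (Suc k)) * z^k)) (at_top \<times>\<^sub>F sequentially)"
      by (intro always_eventually) auto
    show "summable (\<lambda>k. B * norm (Q^(tr (Suc k)) * z^k))"
      by (intro summable_mult jtp_summable1 Q)
  qed simp
  have tb: "(\<lambda>n. \<Sum>k. b k n) \<longlonglongrightarrow> (\<Sum>k. 1 / qinf Q * (Q^(tr (Suc k)) * inverse z ^ Suc k))"
  proof (rule tannerys_theorem[THEN conjunct2, THEN conjunct2])
    fix k
    have "(\<lambda>n. qbin Q (2*n) (n - Suc k) * (Q^(tr (Suc k)) * inverse z ^ Suc k)) \<longlonglongrightarrow> 1 / qinf Q * (Q^(tr (Suc k)) * inverse z ^ Suc k)"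
      by (intro tendsto_intros qbin_lim2[OF Q(1)])
    moreover have "eventually (\<lambda>n. qbin Q (2*n) (n - Suc k) * (Q^(tr (Suc k)) * inverse z ^ Suc k) = b k n) sequentially"
      unfolding eventually_sequentially by (rule exI[of _ "Suc k"]) (auto simp: b_def)
    ultimately show "(\<lambda>n. b k n) \<longlonglongrightarrow> 1 / qinf Q * (Q^(tr (Suc k)) * inverse z ^ Suc k)"
      by (rule Lim_transform_eventually)
  next
    have "norm (b k n) \<le> B * norm (Q^(tr (Suc k)) * inverse z ^ Suc k)" for k n
    proof (cases "k < n")
      case True
      then have "norm (b k n) = norm (qbin Q (2*n) (n - Suc k)) * norm (Q^(tr (Suc k)) * inverse z ^ Suc k)"
        by (simp add: b_def norm_mult mult.assoc)
      also have "\<dots> \<le> B * norm (Q^(tr (Suc k)) * inverse z ^ Suc k)" by (intro mult_right_mono B) simp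
      finally show ?thesis .
    qed (use B in \<open>simp add: b_def\<close>)
    then show "eventually (\<lambda>(k,n). norm (b k n) \<le> B * norm (Q^(tr (Suc k)) * inverse z ^ Suc k)) (at_top \<times>\<^sub>F sequentially)"
      by (intro always_eventually) auto
    show "summable (\<lambda>k. B * norm (Q^(tr (Suc k)) * inverse z ^ Suc k))"
      by (intro summable_mult jtp_summable2 Q)
  qed simp
  have sa: "(\<Sum>k. a k n) = (\<Sum>k\<le>n. qbin Q (2*n) (n+k) * Q^(tr (Suc k)) * z^k)" for n
    by (subst suminf_finite[of "{..n}"]) (auto simp: a_def)
  have sb: "(\<Sum>k. b k n) = (\<Sum>k<n. qbin Q (2*n) (n - Suc k) * Q^(tr (Suc k)) * inverse z ^ Suc k)" for n
    by (subst suminf_finite[of "{..<n}"]) (auto simp: b_def)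
  have c1: "convergent_prod (\<lambda>t. 1 + z*Q^(Suc t))"
    by (rule cprod_conv) (use summable_mult[OF summable_geo_Suc[OF Q(1)], of "norm z"] in \<open>simp add: norm_mult norm_power del: power_Suc\<close>)
  have c2: "convergent_prod (\<lambda>s. 1 + inverse z * Q^s)"
    by (rule cprod_conv) (use summable_mult[OF summable_geometric[of "norm Q"], of "norm (inverse z)"] Q in \<open>simp add: norm_mult norm_power\<close>)
  have l1: "(\<lambda>n. \<Prod>t<n. 1 + z*Q^(Suc t)) \<longlonglongrightarrow> (\<Prod>t. 1 + z*Q^(Suc t))"
    using convergent_prod_LIMSEQ[OF c1] LIMSEQ_lessThan_iff_atMost by blast
  have l2: "(\<lambda>n. \<Prod>s<n. 1 + inverse z * Q^s) \<longlonglongrightarrow> (\<Prod>s. 1 + inverse z * Q^s)"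
    using convergent_prod_LIMSEQ[OF c2] LIMSEQ_lessThan_iff_atMost by blast
  have "(\<lambda>n. (\<Prod>t<n. 1 + z*Q^(Suc t)) * (\<Prod>s<n. 1 + inverse z * Q^s)) \<longlonglongrightarrow>
        (\<Sum>k. 1 / qinf Q * (Q^(tr (Suc k)) * z^k)) + (\<Sum>k. 1 / qinf Q * (Q^(tr (Suc k)) * inverse z ^ Suc k))"
  proof -
    have eqn: "(\<lambda>n. (\<Prod>t<n. 1 + z*Q^(Suc t)) * (\<Prod>s<n. 1 + inverse z * Q^s)) = (\<lambda>n. (\<Sum>k. a k n) + (\<Sum>k. b k n))"
      by (rule ext) (simp only: sa sb jtp_fin[OF Q z])
    show ?thesis unfolding eqn by (rule tendsto_add[OF ta tb])
  qed
  moreover have "(\<lambda>n. (\<Prod>t<n. 1 + z*Q^(Suc t)) * (\<Prod>s<n. 1 + inverse z * Q^s)) \<longlonglongrightarrow>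
        (\<Prod>t. 1 + z*Q^(Suc t)) * (\<Prod>s. 1 + inverse z * Q^s)"
    by (rule tendsto_mult[OF l1 l2])
  ultimately have eq: "(\<Prod>t. 1 + z*Q^(Suc t)) * (\<Prod>s. 1 + inverse z * Q^s) =
      (\<Sum>k. 1 / qinf Q * (Q^(tr (Suc k)) * z^k)) + (\<Sum>k. 1 / qinf Q * (Q^(tr (Suc k)) * inverse z ^ Suc k))"
    using LIMSEQ_unique by blast
  have s1: "summable (\<lambda>k. Q^(tr (Suc k)) * z^k)"
    by (rule summable_norm_cancel[OF jtp_summable1[OF Q(1)]])
  have s2: "summable (\<lambda>k. Q^(tr (Suc k)) * inverse z ^ Suc k)"
    by (rule summable_norm_cancel[OF jtp_summable2[OF Q(1)]])
  show ?thesis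
    unfolding eq suminf_mult[OF s1] suminf_mult[OF s2]
    using qinf_nz[OF Q(1)] by (simp add: field_simps)
qed

lemma complex_tr: "(of_nat (tr i) :: complex) = of_nat i * (of_nat i - 1) / 2"
  by (induction i) (simp_all add: field_simps)

lemma qpow_add: "qpow \<tau> x * qpow \<tau> y = qpow \<tau> (x + y)"
  unfolding qpow_def by (simp add: exp_add[symmetric] algebra_simps)

lemma qpow_nz: "qpow \<tau> x \<noteq> 0"
  unfolding qpow_def by simp

lemma qpow_exp: "qpow \<tau> x = exp (2 * of_real pi * \<i> * of_real x * \<tau>)"
  by (simp add: qpow_def)

lemma qpow_nat: "qpow \<tau> 1 ^ n = qpow \<tau> (real n)"
  unfolding qpow_def by (simp add: exp_of_nat_mult[symmetric] algebra_simps)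

lemma qpow_scale: "qpow (of_nat d * \<tau>) c = qpow \<tau> (real d * c)"
  unfolding qpow_def by (simp add: algebra_simps)

lemma qpow_norm:
  assumes "Im \<tau> > 0" "x > 0"
  shows "norm (qpow \<tau> x) < 1"
proof -
  have "Re (2 * of_real pi * \<i> * of_real x * \<tau>) = - (2 * pi * x * Im \<tau>)"
    by simp
  moreover have "2 * pi * x * Im \<tau> > 0" using assms by (simp add: pi_gt_zero)
  ultimately show ?thesis unfolding qpow_def by simp
qed

lemma infsum_nat_suminf:
  fixes f :: "nat \<Rightarrow> complex"
  assumes "summable (\<lambda>n. norm (f n))"
  shows "f summable_on UNIV" "infsum f UNIV = suminf f"
proof -
  show s: "f summable_on UNIV" by (rule norm_summable_imp_summable_on[OF assms])
  have "f sums infsum f UNIV" by (rule has_sum_imp_sums[OF has_sum_infsum[OF s]])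
  then show "infsum f UNIV = suminf f" by (simp add: sums_iff)
qed

lemma infsum_int_split:
  fixes g :: "int \<Rightarrow> complex"
  assumes s1: "summable (\<lambda>k. norm (g (int k)))" and s2: "summable (\<lambda>k. norm (g (- int k - 1)))"
  shows "infsum g UNIV = (\<Sum>k. g (int k)) + (\<Sum>k. g (- int k - 1))"
proof -
  define A where "A = range (int :: nat \<Rightarrow> int)"
  define h where "h k = - int k - 1" for k :: nat
  define B where "B = range h"
  have injA: "inj_on int (UNIV :: nat set)" by (simp add: inj_on_def)
  have injB: "inj_on h UNIV" by (simp add: inj_on_def h_def)
  have U: "UNIV = A \<union> B"
  proof -
    have "m \<in> A \<union> B" for m :: int
    proof (cases "m \<ge> 0")
      case True
      then have "m = int (nat m)" by simp
      then show ?thesis unfolding A_def by blast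
    next
      case False
      then have "m = h (nat (- m - 1))" by (simp add: h_def)
      then show ?thesis unfolding B_def by blast
    qed
    then show ?thesis by blast
  qed
  have D: "A \<inter> B = {}" by (auto simp: A_def B_def h_def)
  have sA: "g summable_on A" unfolding A_def summable_on_reindex[OF injA]
    using infsum_nat_suminf(1)[OF s1] by (simp add: o_def)
  have sB: "g summable_on B" unfolding B_def summable_on_reindex[OF injB]
    using infsum_nat_suminf(1)[of "\<lambda>k. g (h k)"] s2 by (simp add: o_def h_def)
  have "infsum g UNIV = infsum g A + infsum g B" unfolding U by (rule infsum_Un_disjoint[OF sA sB D])
  also have "infsum g A = (\<Sum>k. g (int k))" unfolding A_def infsum_reindex[OF injA]
    using infsum_nat_suminf(2)[OF s1] by (simp add: o_def)
  also have "infsum g B = (\<Sum>k. g (- int k - 1))" unfolding B_def infsum_reindex[OF injB]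
    using infsum_nat_suminf(2)[of "\<lambda>k. g (h k)"] s2 by (simp add: o_def h_def)
  finally show ?thesis .
qed

lemma theta_term:
  fixes m :: int
  shows "exp (of_real pi * \<i> * (of_int m + 1/2)^2 * (of_nat d * \<tau>) + 2 * of_real pi * \<i> * (of_int m + 1/2) * ((1/2 + of_nat r * \<tau>) + 1/2))
   = - qpow \<tau> (real d/8 + real r/2) * exp (2* of_real pi* \<i> * of_nat d* \<tau> * (of_int m * (of_int m + 1) / 2))
       * exp (2* of_real pi* \<i> * of_nat r* \<tau> * of_int m)"
proof -
  have "of_real pi * \<i> * (of_int m + 1/2)^2 * (of_nat d * \<tau>) + 2 * of_real pi * \<i> * (of_int m + 1/2) * ((1/2 + of_nat r * \<tau>) + 1/2)
    = ((2 * of_int m + 1) * of_real pi) * \<i> + (2 * of_real pi * \<i> * of_real (real d/8 + real r/2) * \<tau>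
       + (2* of_real pi* \<i> * of_nat d* \<tau> * (of_int m * (of_int m + 1) / 2) + 2* of_real pi* \<i> * of_nat r* \<tau> * of_int m))"
    by (simp add: field_simps power2_eq_square)
  moreover have "exp (((2 * of_int m + 1) * of_real pi) * \<i>) = -1"
    using exp_integer_2pi_plus1[of "of_int m"] by simp
  ultimately show ?thesis by (simp add: exp_add qpow_def)
qed

lemma theta_term_pos:
  "exp (2 * of_real pi * \<i> * of_nat d * \<tau> * (of_int (int k) * (of_int (int k) + 1) / 2)) * exp (2 * of_real pi * \<i> * of_nat r * \<tau> * of_int (int k))
   = exp (2 * of_real pi * \<i> * of_nat d * \<tau>) ^ tr (Suc k) * exp (2 * of_real pi * \<i> * of_nat r * \<tau>) ^ k"
proof -
  have e: "(of_int (int k) * (of_int (int k) + 1) / 2 :: complex) = of_nat (tr (Suc k))"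
    by (simp add: complex_tr field_simps)
  have h1: "exp (2 * of_real pi * \<i> * of_nat d * \<tau> * (of_int (int k) * (of_int (int k) + 1) / 2)) = exp (2 * of_real pi * \<i> * of_nat d * \<tau>) ^ tr (Suc k)"
  proof -
    have "2 * of_real pi * \<i> * of_nat d * \<tau> * (of_int (int k) * (of_int (int k) + 1) / 2) = of_nat (tr (Suc k)) * (2 * of_real pi * \<i> * of_nat d * \<tau>)"
      unfolding e by (rule mult.commute)
    then show ?thesis by (simp only: exp_of_nat_mult)
  qed
  have h2: "exp (2 * of_real pi * \<i> * of_nat r * \<tau> * of_int (int k)) = exp (2 * of_real pi * \<i> * of_nat r * \<tau>) ^ k"
  proof -
    have "2 * of_real pi * \<i> * of_nat r * \<tau> * of_int (int k) = of_nat k * (2 * of_real pi * \<i> * of_nat r * \<tau>)" by simp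
    then show ?thesis by (simp only: exp_of_nat_mult)
  qed
  show ?thesis by (simp only: h1 h2)
qed

lemma theta_term_neg:
  "exp (2 * of_real pi * \<i> * of_nat d * \<tau> * (of_int (- int k - 1) * (of_int (- int k - 1) + 1) / 2)) * exp (2 * of_real pi * \<i> * of_nat r * \<tau> * of_int (- int k - 1))
   = exp (2 * of_real pi * \<i> * of_nat d * \<tau>) ^ tr (Suc k) * inverse (exp (2 * of_real pi * \<i> * of_nat r * \<tau>)) ^ Suc k"
proof -
  have e: "(of_int (- int k - 1) * (of_int (- int k - 1) + 1) / 2 :: complex) = of_nat (tr (Suc k))"
    by (simp add: complex_tr field_simps)
  have h1: "exp (2 * of_real pi * \<i> * of_nat d * \<tau> * (of_int (- int k - 1) * (of_int (- int k - 1) + 1) / 2)) = exp (2 * of_real pi * \<i> * of_nat d * \<tau>) ^ tr (Suc k)"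
  proof -
    have "2 * of_real pi * \<i> * of_nat d * \<tau> * (of_int (- int k - 1) * (of_int (- int k - 1) + 1) / 2) = of_nat (tr (Suc k)) * (2 * of_real pi * \<i> * of_nat d * \<tau>)"
      unfolding e by (rule mult.commute)
    then show ?thesis by (simp only: exp_of_nat_mult)
  qed
  have h2: "exp (2 * of_real pi * \<i> * of_nat r * \<tau> * of_int (- int k - 1)) = inverse (exp (2 * of_real pi * \<i> * of_nat r * \<tau>)) ^ Suc k"
  proof -
    have "2 * of_real pi * \<i> * of_nat r * \<tau> * of_int (- int k - 1) = of_nat (Suc k) * (- (2 * of_real pi * \<i> * of_nat r * \<tau>))"
      by (simp add: algebra_simps)
    then show ?thesis by (simp only: exp_of_nat_mult exp_minus)
  qed
  show ?thesis by (simp only: h1 h2)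
qed

lemma prod_relation:
  fixes a b Q :: complex
  assumes Q: "norm Q < 1" and a: "norm a < 1" "a \<noteq> 0" and b: "norm b < 1" and ab: "a * b = Q"
  shows "a * ((\<Prod>t. 1 + a*Q^(Suc t)) * (\<Prod>s. 1 + inverse a * Q^s)) = (\<Prod>k. (1 + a*Q^k) * (1 + b*Q^k))"
proof -
  have sg: "summable (\<lambda>k. norm (c * Q^k))" for c
    using summable_mult[OF summable_geometric[of "norm Q"], of "norm c"] Q by (simp add: norm_mult norm_power)
  have ca: "convergent_prod (\<lambda>k. 1 + a*Q^k)" by (rule cprod_conv[OF sg])
  have cb: "convergent_prod (\<lambda>k. 1 + b*Q^k)" by (rule cprod_conv[OF sg])
  have ci: "convergent_prod (\<lambda>k. 1 + inverse a*Q^k)" by (rule cprod_conv[OF sg])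
  have a1: "1 + a \<noteq> 0"
  proof
    assume "1 + a = 0" then have "a = -1" by (simp add: add_eq_0_iff)
    then show False using a by simp
  qed
  have a2: "1 + inverse a \<noteq> 0"
  proof
    assume "1 + inverse a = 0" then have "inverse a = -1" by (simp add: add_eq_0_iff)
    then have "a = -1" by (metis inverse_minus_eq inverse_inverse_eq inverse_1)
    then show False using a by simp
  qed
  have e1: "(\<Prod>t. 1 + a*Q^(Suc t)) = (\<Prod>k. 1 + a*Q^k) / (1 + a)"
    using prodinf_split_head[OF ca] a1 by simp
  have e2: "(\<Prod>t. 1 + inverse a*Q^(Suc t)) = (\<Prod>k. 1 + inverse a*Q^k) / (1 + inverse a)"
    using prodinf_split_head[OF ci] a2 by simp
  have e3: "(\<lambda>t. 1 + inverse a*Q^(Suc t)) = (\<lambda>t. 1 + b*Q^t)"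
    using a ab by (auto simp: field_simps)
  have "(\<Prod>s. 1 + inverse a * Q^s) = (1 + inverse a) * (\<Prod>k. 1 + b*Q^k)"
    using e2 e3 a2 by simp
  then have "a * ((\<Prod>t. 1 + a*Q^(Suc t)) * (\<Prod>s. 1 + inverse a * Q^s))
      = (a * (1 + inverse a) / (1 + a)) * ((\<Prod>k. 1 + a*Q^k) * (\<Prod>k. 1 + b*Q^k))"
    using e1 by simp
  also have "a * (1 + inverse a) / (1 + a) = 1"
  proof -
    have "a * (1 + inverse a) = 1 + a" using a(2) by (simp add: distrib_left)
    then show ?thesis using a1 by simp
  qed
  also have "(\<Prod>k. 1 + a*Q^k) * (\<Prod>k. 1 + b*Q^k) = (\<Prod>k. (1 + a*Q^k) * (1 + b*Q^k))"
    by (rule prodinf_mult[OF ca cb])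
  finally show ?thesis by simp
qed

locale qset =
  fixes a b Q :: complex
  assumes Q: "norm Q < 1" and a: "norm a < 1" and b: "norm b < 1" and ab: "a * b = Q"
begin

definition Pinf :: "complex \<Rightarrow> complex" where
  "Pinf y = (\<Prod>k. (1 + a*y*Q^k) * (1 + b*y*Q^k))"

definition cK :: "complex \<Rightarrow> nat \<Rightarrow> complex" where
  "cK x n = x^n * Q^(n*n) * qpoch x Q n / qpoch Q Q n"

definition Kf :: "complex \<Rightarrow> complex" where
  "Kf x = (\<Sum>n. cK x n * Pinf (x*Q^n))"

definition U :: "complex \<Rightarrow> nat \<Rightarrow> complex" where
  "U x n = (if n = 0 then 0 else x^(n+1) * Q^(n*n) * qpoch (x*Q) Q (n-1) / qpoch Q Q (n-1))"

definition S where "S = norm a + norm b + norm a * norm b"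

lemma S_nonneg: "S \<ge> 0" by (simp add: S_def)

lemma rho: "0 \<le> norm Q" "norm Q < 1" using Q by auto

lemma fbound:
  assumes y: "norm y \<le> 1"
  shows "norm ((1 + a*y*Q^k)*(1 + b*y*Q^k) - 1) \<le> norm y * S * norm Q ^ k"
proof -
  define t where "t = norm y * norm Q ^ k"
  have t0: "0 \<le> t" by (simp add: t_def)
  have t1: "t \<le> 1" unfolding t_def using y rho by (simp add: mult_le_one power_le_one)
  have eq: "(1 + a*y*Q^k)*(1 + b*y*Q^k) - 1 = a*y*Q^k + b*y*Q^k + (a*y*Q^k)*(b*y*Q^k)"
    by (simp add: algebra_simps)
  have "norm ((1 + a*y*Q^k)*(1 + b*y*Q^k) - 1) \<le> norm (a*y*Q^k) + norm (b*y*Q^k) + norm (a*y*Q^k) * norm (b*y*Q^k)"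
    unfolding eq by (metis norm_mult norm_triangle_le norm_triangle_ineq add_mono order_refl)
  also have "\<dots> = norm a * t + norm b * t + (norm a * t) * (norm b * t)"
    by (simp add: t_def norm_mult norm_power algebra_simps)
  also have "(norm a * t) * (norm b * t) \<le> (norm a * t) * norm b"
    by (intro mult_left_mono) (use t0 t1 in \<open>auto intro: mult_left_le\<close>)
  finally show ?thesis by (simp add: S_def t_def algebra_simps)
qed

lemma fsummable:
  assumes y: "norm y \<le> 1"
  shows "summable (\<lambda>k. norm ((1 + a*y*Q^k)*(1 + b*y*Q^k) - 1))"
    and "(\<Sum>k. norm ((1 + a*y*Q^k)*(1 + b*y*Q^k) - 1)) \<le> norm y * S / (1 - norm Q)"
proof -
  have sg: "summable (\<lambda>k. norm y * S * norm Q ^ k)"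
    by (intro summable_mult summable_geometric) (use rho in auto)
  show s: "summable (\<lambda>k. norm ((1 + a*y*Q^k)*(1 + b*y*Q^k) - 1))"
    by (rule summable_comparison_test'[OF sg]) (use fbound[OF y] in auto)
  have "(\<Sum>k. norm ((1 + a*y*Q^k)*(1 + b*y*Q^k) - 1)) \<le> (\<Sum>k. norm y * S * norm Q ^ k)"
    by (rule suminf_le[OF _ s sg]) (rule fbound[OF y])
  also have "\<dots> = norm y * S / (1 - norm Q)"
    using suminf_geometric[of "norm Q"] rho by (simp add: suminf_mult)
  finally show "(\<Sum>k. norm ((1 + a*y*Q^k)*(1 + b*y*Q^k) - 1)) \<le> norm y * S / (1 - norm Q)" .
qed

lemma Pinf_conv:
  assumes y: "norm y \<le> 1"
  shows "convergent_prod (\<lambda>k. (1 + a*y*Q^k) * (1 + b*y*Q^k))"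
  using cprod_conv[OF fsummable(1)[OF y]] by simp

lemma Pinf_minus1:
  assumes y: "norm y \<le> 1"
  shows "norm (Pinf y - 1) \<le> exp (norm y * S / (1 - norm Q)) - 1"
proof -
  have "norm (Pinf y - 1) \<le> exp (\<Sum>k. norm ((1 + a*y*Q^k)*(1 + b*y*Q^k) - 1)) - 1"
    using cprod_bound[OF fsummable(1)[OF y]] by (simp add: Pinf_def)
  also have "\<dots> \<le> exp (norm y * S / (1 - norm Q)) - 1"
    using fsummable(2)[OF y] by simp
  finally show ?thesis .
qed

definition BP where "BP = exp (S / (1 - norm Q))"

lemma Pinf_bound:
  assumes y: "norm y \<le> 1"
  shows "norm (Pinf y) \<le> BP"
proof -
  have "norm (Pinf y) \<le> norm (Pinf y - 1) + 1"
    by (metis add.commute diff_add_cancel norm_one norm_triangle_ineq)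
  also have "\<dots> \<le> exp (norm y * S / (1 - norm Q))" using Pinf_minus1[OF y] by simp
  also have "\<dots> \<le> BP" unfolding BP_def
    using y rho S_nonneg by (auto intro!: divide_right_mono mult_left_le_one_le simp: mult_le_cancel_right1)
  finally show ?thesis .
qed

lemma one_plus_nz:
  fixes c y :: complex
  assumes "norm c < 1" "norm y \<le> 1"
  shows "1 + c*y \<noteq> 0"
proof
  assume "1 + c*y = 0"
  then have "c*y = -1" by (simp add: add_eq_0_iff)
  then have "norm (c*y) = 1" by simp
  moreover have "norm (c*y) \<le> norm c" using assms(2) by (simp add: norm_mult mult_left_le)
  ultimately show False using assms(1) by simp
qed

lemma factor_nz:
  assumes y: "norm y \<le> 1"
  shows "(1 + a*y) * (1 + b*y) \<noteq> 0"
  using one_plus_nz[OF a y] one_plus_nz[OF b y] by simp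

lemma Pinf_shift:
  assumes y: "norm y \<le> 1"
  shows "Pinf y = (1 + a*y) * (1 + b*y) * Pinf (y*Q)"
proof -
  have "(\<Prod>n. (1 + a*y*Q^(Suc n)) * (1 + b*y*Q^(Suc n))) = Pinf y / ((1 + a*y) * (1 + b*y))"
    using prodinf_split_head[OF Pinf_conv[OF y]] factor_nz[OF y] by (simp add: Pinf_def)
  moreover have "(\<Prod>n. (1 + a*y*Q^(Suc n)) * (1 + b*y*Q^(Suc n))) = Pinf (y*Q)"
    unfolding Pinf_def by (simp add: algebra_simps)
  ultimately show ?thesis using factor_nz[OF y] by (simp add: field_simps)
qed

end

lemma key_alg:
  fixes x Q w s :: complex
  shows "x*w*w*Q*(1-x) * (1 + s*x*Q*w + Q*x^2*Q^2*w^2) - (1+s*x) * (x*Q*w*w*w*Q*(1-x*Q*w))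
      - x*Q*w*w*(1-x*Q*w)*(1-Q*w)
    = x^3*w^4*Q^4*(1-x*Q*w) - x^2*w*w*Q*(1-Q*w) * (1 + s*x*Q*w + Q*x^2*Q^2*w^2)"
  by algebra

context qset
begin

lemma norm_le1_mult:
  fixes x :: complex
  assumes "norm x \<le> 1" shows "norm (x * Q ^ n) \<le> 1"
  using assms rho by (simp add: norm_mult norm_power mult_le_one power_le_one)

lemma norm_le1_mult1:
  fixes x :: complex
  assumes "norm x \<le> 1" shows "norm (x * Q) \<le> 1"
  using norm_le1_mult[OF assms, of 1] by simp

lemma rho_sq: "norm Q ^ (n*n) \<le> norm Q ^ n"
proof (cases n)
  case (Suc m)
  then show ?thesis using rho by (intro power_decreasing) auto
qed simp

lemma cK_bound:
  obtains C where "C \<ge> 0" "\<And>x n. norm x \<le> 1 \<Longrightarrow> norm (cK x n) \<le> C * norm x ^ n * norm Q ^ (n*n)"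
    "\<And>x n. norm x \<le> 1 \<Longrightarrow> norm (U x n) \<le> C * norm Q ^ (n*n)"
proof -
  obtain c where c: "c > 0" "\<And>n. c \<le> norm (qpoch Q Q n)" using qpoch_QQ_lower[OF Q] by blast
  define E where "E = exp (1 / (1 - norm Q))"
  have E: "norm (qpoch y Q n) \<le> E" if "norm y \<le> 1" for y n
  proof -
    have "norm (qpoch y Q n) \<le> exp (norm y / (1 - norm Q))" by (rule qpoch_upper[OF Q])
    also have "\<dots> \<le> E"
    proof -
      have "norm y / (1 - norm Q) \<le> 1 / (1 - norm Q)" using that rho by (intro divide_right_mono) auto
      then show ?thesis unfolding E_def by simp
    qed
    finally show ?thesis .
  qed
  have E0: "0 \<le> E" by (simp add: E_def)
  have b1: "norm (cK x n) \<le> E / c * norm x ^ n * norm Q ^ (n*n)" if x: "norm x \<le> 1" for x n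
  proof -
    have "norm (cK x n) = norm x ^ n * norm Q ^ (n*n) * (norm (qpoch x Q n) / norm (qpoch Q Q n))"
      by (simp add: cK_def norm_mult norm_divide norm_power)
    also have "norm (qpoch x Q n) / norm (qpoch Q Q n) \<le> E / c"
      by (intro frac_le E x c) (use E0 c in auto)
    then have "norm x ^ n * norm Q ^ (n*n) * (norm (qpoch x Q n) / norm (qpoch Q Q n)) \<le> norm x ^ n * norm Q ^ (n*n) * (E / c)"
      by (intro mult_left_mono) auto
    finally show ?thesis by (simp add: algebra_simps)
  qed
  have b2: "norm (U x n) \<le> E / c * norm Q ^ (n*n)" if x: "norm x \<le> 1" for x n
  proof (cases n)
    case 0 then show ?thesis using E0 c by (simp add: U_def)
  next
    case (Suc m)
    have eq: "norm (U x n) = norm x ^ (n+1) * norm Q ^ (n*n) * (norm (qpoch (x*Q) Q m) / norm (qpoch Q Q m))"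
      using Suc by (simp add: U_def norm_mult norm_divide norm_power)
    have r: "norm (qpoch (x*Q) Q m) / norm (qpoch Q Q m) \<le> E / c"
      by (intro frac_le E norm_le1_mult1 x c) (use E0 c in auto)
    have xn: "norm x ^ (n+1) \<le> 1" by (rule power_le_one) (use x in auto)
    have "norm x ^ (n+1) * norm Q ^ (n*n) * (norm (qpoch (x*Q) Q m) / norm (qpoch Q Q m)) \<le> 1 * norm Q ^ (n*n) * (E / c)"
      by (intro mult_mono r xn order_refl) (use E0 c in auto)
    then show ?thesis unfolding eq by (simp add: algebra_simps)
  qed
  show ?thesis by (rule that[of "E / c"]) (use E0 c b1 b2 in auto)
qed

lemma term_summable:
  assumes x: "norm x \<le> 1"
  shows "summable (\<lambda>n. norm (cK x n * Pinf (x*Q^n)))"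
proof -
  obtain C where C: "C \<ge> 0" "\<And>x n. norm x \<le> 1 \<Longrightarrow> norm (cK x n) \<le> C * norm x ^ n * norm Q ^ (n*n)"
    "\<And>x n. norm x \<le> 1 \<Longrightarrow> norm (U x n) \<le> C * norm Q ^ (n*n)"
    using cK_bound by blast
  have bnd: "norm (cK x n * Pinf (x*Q^n)) \<le> C * BP * norm Q ^ n" for n
  proof -
    have "norm (cK x n) \<le> C * norm Q ^ n"
    proof -
      have "norm (cK x n) \<le> C * norm x ^ n * norm Q ^ (n*n)" by (rule C(2)[OF x])
      also have "\<dots> \<le> C * 1 * norm Q ^ n"
        by (intro mult_mono rho_sq) (use C x in \<open>auto simp: power_le_one\<close>)
      finally show ?thesis by simp
    qed
    moreover have "norm (Pinf (x*Q^n)) \<le> BP" by (rule Pinf_bound[OF norm_le1_mult[OF x]])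
    ultimately have "norm (cK x n) * norm (Pinf (x*Q^n)) \<le> (C * norm Q ^ n) * BP"
      by (intro mult_mono) (use C(1) in auto)
    then show ?thesis by (simp add: norm_mult algebra_simps)
  qed
  have sg: "summable (\<lambda>n. C * BP * norm Q ^ n)"
    by (intro summable_mult summable_geometric) (use rho in auto)
  show ?thesis by (rule summable_comparison_test'[OF sg]) (use bnd in auto)
qed

lemma step_id:
  assumes x: "norm x \<le> 1"
  shows "cK x (Suc m) * ((1 + a*x*Q^(Suc m))*(1 + b*x*Q^(Suc m))) - (1 + (a+b)*x) * cK (x*Q) (Suc m)
      - x*Q*(1 - x*Q) * cK (x*Q*Q) m
   = U x (Suc (Suc m)) - U x (Suc m) * ((1 + a*x*Q^(Suc m))*(1 + b*x*Q^(Suc m)))"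
proof -
  define p where "p = qpoch (x*Q) Q m"
  define D where "D = qpoch Q Q m"
  define w where "w = Q^m"
  define X where "X = x^m"
  define M where "M = Q^(m*m)"
  define s where "s = a + b"
  have D0: "D \<noteq> 0" unfolding D_def by (rule qpoch_QQ_nonzero[OF Q])
  have w0: "1 - Q*w \<noteq> 0" using qpoch_QQ_nonzero[OF Q, of "Suc m"] by (simp add: D_def w_def qpoch_Suc)
  have xq0: "1 - x*Q \<noteq> 0"
  proof
    assume "1 - x*Q = 0" then have "x*Q = 1" by simp
    then have "norm (x*Q) = 1" by simp
    moreover have "norm (x*Q) \<le> norm Q" using x by (simp add: norm_mult mult_left_le_one_le)
    then have "norm (x*Q) < 1" using rho by simp
    ultimately show False by simp
  qed
  have h1: "qpoch x Q (Suc m) = (1 - x) * p" by (simp add: p_def qpoch_Suc')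
  have h2: "qpoch (x*Q) Q (Suc m) = p * (1 - x*Q*w)" by (simp add: p_def w_def qpoch_Suc)
  have h3: "qpoch (x*Q*Q) Q m = p * (1 - x*Q*w) / (1 - x*Q)"
  proof -
    have "(1 - x*Q) * qpoch (x*Q*Q) Q m = p * (1 - x*Q*w)" using qpoch_Suc'[of "x*Q" Q m] h2 by simp
    then show ?thesis using nonzero_eq_divide_eq[OF xq0] by (simp add: mult.commute)
  qed
  have h4: "qpoch Q Q (Suc m) = D * (1 - Q*w)" by (simp add: D_def w_def qpoch_Suc)
  have p1: "x^(Suc m) = x*X" by (simp add: X_def)
  have p2: "(x*Q)^(Suc m) = x*Q*X*w" by (simp add: X_def w_def power_mult_distrib)
  have p3: "(x*Q*Q)^m = X*w*w" by (simp add: X_def w_def power_mult_distrib)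
  have p4: "Q^(Suc m * Suc m) = M*w*w*Q"
  proof -
    have "Suc m * Suc m = m*m + m + m + 1" by simp
    then show ?thesis by (simp add: M_def w_def power_add)
  qed
  have p5: "Q^(Suc (Suc m) * Suc (Suc m)) = M*w^4*Q^4"
  proof -
    have "Suc (Suc m) * Suc (Suc m) = m*m + m + m + m + m + 4" by simp
    then show ?thesis by (simp add: M_def w_def power_add power4_eq_xxxx)
  qed
  have p6: "x^(Suc (Suc m) + 1) = X*x^3" by (simp add: X_def power3_eq_cube)
  have p7: "x^(Suc m + 1) = X*x^2" by (simp add: X_def power2_eq_square)
  have qs: "Q^(Suc m) = Q*w" by (simp add: w_def)
  have Eeq: "(1 + a*x*Q^(Suc m))*(1 + b*x*Q^(Suc m)) = 1 + s*x*Q*w + Q*x^2*Q^2*w^2"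
  proof -
    have "(1 + a*x*Q^(Suc m))*(1 + b*x*Q^(Suc m)) = 1 + (a+b)*x*Q*w + (a*b)*x^2*Q^2*w^2"
      by (simp add: qs w_def algebra_simps power2_eq_square)
    then show ?thesis by (simp add: ab s_def)
  qed
  define F where "F = X*M*p/(D*(1-Q*w))"
  have cK1: "cK x (Suc m) = F * (x*w*w*Q*(1-x))"
    unfolding cK_def h1 h4 p1 p4 F_def using D0 w0 by (simp add: field_simps)
  have cK2: "cK (x*Q) (Suc m) = F * (x*Q*w*w*w*Q*(1-x*Q*w))"
    unfolding cK_def h2 h4 p2 p4 F_def using D0 w0 by (simp add: field_simps)
  have cK3: "x*Q*(1 - x*Q) * cK (x*Q*Q) m = F * (x*Q*w*w*(1-x*Q*w)*(1-Q*w))"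
    unfolding cK_def h3 p3 F_def using D0 w0 xq0 by (simp add: field_simps M_def D_def)
  have U2: "U x (Suc (Suc m)) = F * (x^3*w^4*Q^4*(1-x*Q*w))"
  proof -
    have "U x (Suc (Suc m)) = x^(Suc (Suc m) + 1) * Q^(Suc (Suc m) * Suc (Suc m)) * qpoch (x*Q) Q (Suc m) / qpoch Q Q (Suc m)"
      by (simp add: U_def)
    then show ?thesis unfolding p6 p5 h2 h4 F_def using D0 w0 by (simp add: field_simps)
  qed
  have U1: "U x (Suc m) = F * (x^2*w*w*Q*(1-Q*w))"
  proof -
    have "U x (Suc m) = x^(Suc m + 1) * Q^(Suc m * Suc m) * p / D"
      by (simp add: U_def p_def D_def)
    then show ?thesis unfolding p7 p4 F_def using D0 w0 by (simp add: field_simps)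
  qed
  have key: "x*w*w*Q*(1-x) * (1 + s*x*Q*w + Q*x^2*Q^2*w^2) - (1+s*x) * (x*Q*w*w*w*Q*(1-x*Q*w))
      - x*Q*w*w*(1-x*Q*w)*(1-Q*w)
    = x^3*w^4*Q^4*(1-x*Q*w) - x^2*w*w*Q*(1-Q*w) * (1 + s*x*Q*w + Q*x^2*Q^2*w^2)"
    by (rule key_alg)
  have "cK x (Suc m) * ((1 + a*x*Q^(Suc m))*(1 + b*x*Q^(Suc m))) - (1 + (a+b)*x) * cK (x*Q) (Suc m)
      - x*Q*(1 - x*Q) * cK (x*Q*Q) m
    = F * (x*w*w*Q*(1-x) * (1 + s*x*Q*w + Q*x^2*Q^2*w^2) - (1+s*x) * (x*Q*w*w*w*Q*(1-x*Q*w))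
      - x*Q*w*w*(1-x*Q*w)*(1-Q*w))"
    unfolding Eeq cK1 cK2 cK3 s_def[symmetric] by (simp add: algebra_simps)
  also have "\<dots> = F * (x^3*w^4*Q^4*(1-x*Q*w) - x^2*w*w*Q*(1-Q*w) * (1 + s*x*Q*w + Q*x^2*Q^2*w^2))"
    by (simp only: key)
  also have "\<dots> = U x (Suc (Suc m)) - U x (Suc m) * ((1 + a*x*Q^(Suc m))*(1 + b*x*Q^(Suc m)))"
    unfolding Eeq U1 U2 by (simp add: algebra_simps)
  finally show ?thesis .
qed


lemma term_bound:
  obtains C where "C \<ge> 0" "\<And>x n. norm x \<le> 1 \<Longrightarrow> norm (cK x n * Pinf (x*Q^n)) \<le> C * norm x ^ n * norm Q ^ n"
    "\<And>x n. norm x \<le> 1 \<Longrightarrow> norm (U x n * Pinf (x*Q^n)) \<le> C * norm Q ^ n"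
proof -
  obtain C where C: "C \<ge> 0" "\<And>x n. norm x \<le> 1 \<Longrightarrow> norm (cK x n) \<le> C * norm x ^ n * norm Q ^ (n*n)"
    "\<And>x n. norm x \<le> 1 \<Longrightarrow> norm (U x n) \<le> C * norm Q ^ (n*n)"
    using cK_bound by blast
  have BP0: "0 \<le> BP" by (simp add: BP_def)
  have t1: "norm (cK x n * Pinf (x*Q^n)) \<le> (C * BP) * norm x ^ n * norm Q ^ n" if x: "norm x \<le> 1" for x n
  proof -
    have "norm (cK x n) \<le> C * norm x ^ n * norm Q ^ n"
    proof -
      have "norm (cK x n) \<le> C * norm x ^ n * norm Q ^ (n*n)" by (rule C(2)[OF x])
      also have "\<dots> \<le> C * norm x ^ n * norm Q ^ n"
        by (intro mult_left_mono rho_sq) (use C in auto)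
      finally show ?thesis .
    qed
    moreover have "norm (Pinf (x*Q^n)) \<le> BP" by (rule Pinf_bound[OF norm_le1_mult[OF x]])
    ultimately have "norm (cK x n) * norm (Pinf (x*Q^n)) \<le> (C * norm x ^ n * norm Q ^ n) * BP"
      by (intro mult_mono) (use C(1) in auto)
    then show ?thesis by (simp add: norm_mult algebra_simps)
  qed
  have t2: "norm (U x n * Pinf (x*Q^n)) \<le> (C * BP) * norm Q ^ n" if x: "norm x \<le> 1" for x n
  proof -
    have "norm (U x n) \<le> C * norm Q ^ n"
    proof -
      have "norm (U x n) \<le> C * norm Q ^ (n*n)" by (rule C(3)[OF x])
      also have "\<dots> \<le> C * norm Q ^ n"
        by (intro mult_left_mono rho_sq) (use C in auto)
      finally show ?thesis .
    qed
    moreover have "norm (Pinf (x*Q^n)) \<le> BP" by (rule Pinf_bound[OF norm_le1_mult[OF x]])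
    ultimately have "norm (U x n) * norm (Pinf (x*Q^n)) \<le> (C * norm Q ^ n) * BP"
      by (intro mult_mono) (use C(1) in auto)
    then show ?thesis by (simp add: norm_mult algebra_simps)
  qed
  show ?thesis by (rule that[of "C * BP"]) (use C(1) BP0 t1 t2 in auto)
qed

lemma Pinf_shift_n:
  assumes x: "norm x \<le> 1"
  shows "Pinf (x*Q^n) = (1 + a*x*Q^n)*(1 + b*x*Q^n) * Pinf (x*Q^(Suc n))"
  using Pinf_shift[OF norm_le1_mult[OF x, of n]] by (simp add: algebra_simps)

lemma Kf_fun:
  assumes x: "norm x \<le> 1"
  shows "Kf x = (1 + (a+b)*x) * Kf (x*Q) + x*Q*(1 - x*Q) * Kf (x*Q*Q)"
proof -
  obtain C where C: "C \<ge> 0" "\<And>x n. norm x \<le> 1 \<Longrightarrow> norm (cK x n * Pinf (x*Q^n)) \<le> C * norm x ^ n * norm Q ^ n"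
    "\<And>x n. norm x \<le> 1 \<Longrightarrow> norm (U x n * Pinf (x*Q^n)) \<le> C * norm Q ^ n"
    using term_bound by blast
  define Y where "Y n = Pinf (x*Q^n)" for n
  define T1 where "T1 n = cK x n * Y n" for n
  define T2 where "T2 n = cK (x*Q) n * Y (Suc n)" for n
  define T3 where "T3 n = cK (x*Q*Q) n * Y (Suc (Suc n))" for n
  define T3' where "T3' n = (case n of 0 \<Rightarrow> 0 | Suc m \<Rightarrow> T3 m)" for n
  define V where "V n = U x n * Y n" for n
  have xQ: "norm (x*Q) \<le> 1" by (rule norm_le1_mult1[OF x])
  have xQQ: "norm (x*Q*Q) \<le> 1" by (rule norm_le1_mult1[OF xQ])
  have e2: "Pinf (x*Q*Q^n) = Y (Suc n)" for n by (simp add: Y_def mult.assoc)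
  have e3: "Pinf (x*Q*Q*Q^n) = Y (Suc (Suc n))" for n by (simp add: Y_def mult.assoc)
  have K1: "T1 sums Kf x"
    unfolding Kf_def T1_def[abs_def] Y_def by (rule summable_sums, rule summable_norm_cancel, rule term_summable[OF x])
  have K2: "T2 sums Kf (x*Q)"
  proof -
    have "(\<lambda>n. cK (x*Q) n * Pinf (x*Q*Q^n)) sums Kf (x*Q)"
      unfolding Kf_def by (rule summable_sums, rule summable_norm_cancel, rule term_summable[OF xQ])
    then show ?thesis by (simp add: T2_def[abs_def] e2)
  qed
  have K3: "T3' sums Kf (x*Q*Q)"
  proof -
    have "(\<lambda>n. cK (x*Q*Q) n * Pinf (x*Q*Q*Q^n)) sums Kf (x*Q*Q)"
      unfolding Kf_def by (rule summable_sums, rule summable_norm_cancel, rule term_summable[OF xQQ])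
    then have "T3 sums Kf (x*Q*Q)" by (simp add: T3_def[abs_def] e3)
    then have "(\<lambda>n. T3' (Suc n)) sums Kf (x*Q*Q)" by (simp add: T3'_def)
    then have "T3' sums (Kf (x*Q*Q) + T3' 0)" by (simp only: sums_Suc_iff)
    then show ?thesis by (simp add: T3'_def)
  qed
  have R: "(\<lambda>n. T1 n - (1 + (a+b)*x) * T2 n - x*Q*(1 - x*Q) * T3' n) sums
      (Kf x - (1 + (a+b)*x) * Kf (x*Q) - x*Q*(1 - x*Q) * Kf (x*Q*Q))"
    by (intro sums_diff sums_mult K1 K2 K3)
  have Ysh: "Y n = (1 + a*x*Q^n)*(1 + b*x*Q^n) * Y (Suc n)" for n
    unfolding Y_def by (rule Pinf_shift_n[OF x])
  have pt: "T1 n - (1 + (a+b)*x) * T2 n - x*Q*(1 - x*Q) * T3' n = V (Suc n) - V n" for n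
  proof (cases n)
    case 0
    have U1: "U x 1 = x^2 * Q" by (simp add: U_def power2_eq_square)
    have "T1 0 - (1 + (a+b)*x) * T2 0 = ((1 + a*x)*(1 + b*x) - (1 + (a+b)*x)) * Y 1"
      using Ysh[of 0] by (simp add: T1_def T2_def cK_def algebra_simps)
    also have "(1 + a*x)*(1 + b*x) - (1 + (a+b)*x) = x^2 * Q"
      using ab by (simp add: algebra_simps power2_eq_square)
    finally show ?thesis using 0 U1 by (simp add: T3'_def V_def U_def power2_eq_square)
  next
    case (Suc m)
    have "T1 n - (1 + (a+b)*x) * T2 n - x*Q*(1 - x*Q) * T3' n
        = (cK x (Suc m) * ((1 + a*x*Q^(Suc m))*(1 + b*x*Q^(Suc m))) - (1 + (a+b)*x) * cK (x*Q) (Suc m)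
            - x*Q*(1 - x*Q) * cK (x*Q*Q) m) * Y (Suc (Suc m))"
      using Suc Ysh[of "Suc m"] by (simp add: T1_def T2_def T3'_def T3_def algebra_simps)
    also have "\<dots> = (U x (Suc (Suc m)) - U x (Suc m) * ((1 + a*x*Q^(Suc m))*(1 + b*x*Q^(Suc m)))) * Y (Suc (Suc m))"
      by (simp only: step_id[OF x])
    also have "\<dots> = V (Suc n) - V n"
      using Suc Ysh[of "Suc m"] by (simp add: V_def algebra_simps)
    finally show ?thesis .
  qed
  have Vlim: "V \<longlonglongrightarrow> 0"
  proof (rule Lim_null_comparison)
    show "eventually (\<lambda>n. norm (V n) \<le> C * norm Q ^ n) sequentially"
      using C(3)[OF x] by (simp add: V_def Y_def)
    show "(\<lambda>n. C * norm Q ^ n) \<longlonglongrightarrow> 0"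
      by (intro tendsto_mult_right_zero LIMSEQ_power_zero) (use rho in simp)
  qed
  have "(\<lambda>n. V (Suc n) - V n) sums (0 - V 0)" by (rule telescope_sums[OF Vlim])
  then have "(\<lambda>n. T1 n - (1 + (a+b)*x) * T2 n - x*Q*(1 - x*Q) * T3' n) sums 0"
    by (simp add: pt V_def U_def)
  with R have "Kf x - (1 + (a+b)*x) * Kf (x*Q) - x*Q*(1 - x*Q) * Kf (x*Q*Q) = 0"
    using sums_unique2 by blast
  then show ?thesis by (simp add: algebra_simps)
qed

lemma norm_Qpow: "norm (Q^j) \<le> 1"
  using rho by (simp add: norm_power power_le_one)

lemma Kf_rec:
  "Kf (Q^j) = (1 + (a+b)*Q^j) * Kf (Q^(Suc j)) + Q^(Suc j) * (1 - Q^(Suc j)) * Kf (Q^(Suc (Suc j)))"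
  using Kf_fun[OF norm_Qpow[of j]] by (simp add: algebra_simps)

lemma cK_Q: "cK Q n = Q^(n*(n+1))"
proof -
  have "n*(n+1) = n + n*n" by simp
  then show ?thesis using qpoch_QQ_nonzero[OF Q, of n] by (simp add: cK_def power_add)
qed

lemma Kf_term_Q: "cK Q n * Pinf (Q*Q^n) = Q^(n*(n+1)) * Pinf (Q^(Suc n))"
  by (simp only: cK_Q power_Suc)

lemma Kf_Q: "Kf Q = (\<Sum>n. Q^(n*(n+1)) * Pinf (Q^(Suc n)))"
  unfolding Kf_def by (simp only: Kf_term_Q)

lemma Pinf_lim0: "(\<lambda>j. Pinf (Q^j)) \<longlonglongrightarrow> 1"
proof (rule LIM_zero_cancel, rule Lim_null_comparison)
  show "eventually (\<lambda>j. norm (Pinf (Q^j) - 1) \<le> exp (norm Q ^ j * S / (1 - norm Q)) - 1) sequentially"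
    using Pinf_minus1[OF norm_Qpow] by (simp add: norm_power)
  have "(\<lambda>j. exp (norm Q ^ j * S / (1 - norm Q)) - 1) \<longlonglongrightarrow> exp (0 * S / (1 - norm Q)) - 1"
    by (intro tendsto_intros LIMSEQ_power_zero) (use rho in auto)
  then show "(\<lambda>j. exp (norm Q ^ j * S / (1 - norm Q)) - 1) \<longlonglongrightarrow> 0" by simp
qed

lemma Kf_lim: "(\<lambda>j. Kf (Q^j)) \<longlonglongrightarrow> 1"
proof -
  obtain C where C: "C \<ge> 0" "\<And>x n. norm x \<le> 1 \<Longrightarrow> norm (cK x n * Pinf (x*Q^n)) \<le> C * norm x ^ n * norm Q ^ n"
    "\<And>x n. norm x \<le> 1 \<Longrightarrow> norm (U x n * Pinf (x*Q^n)) \<le> C * norm Q ^ n"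
    using term_bound by blast
  define bb where "bb n = (if n = 0 then (1::complex) else 0)" for n :: nat
  have "(\<lambda>j. \<Sum>n. cK (Q^j) n * Pinf (Q^j*Q^n)) \<longlonglongrightarrow> (\<Sum>n. bb n)"
  proof (rule tannerys_theorem[THEN conjunct2, THEN conjunct2])
    fix n
    show "(\<lambda>j. cK (Q^j) n * Pinf (Q^j*Q^n)) \<longlonglongrightarrow> bb n"
    proof (cases n)
      case 0
      then show ?thesis using Pinf_lim0 by (simp add: bb_def cK_def)
    next
      case (Suc m)
      have "(\<lambda>j. cK (Q^j) n * Pinf (Q^j*Q^n)) \<longlonglongrightarrow> 0"
      proof (rule Lim_null_comparison)
        show "eventually (\<lambda>j. norm (cK (Q^j) n * Pinf (Q^j*Q^n)) \<le> C * norm Q ^ n * norm Q ^ j) sequentially"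
        proof (intro always_eventually allI)
          fix j
          have "norm (cK (Q^j) n * Pinf (Q^j*Q^n)) \<le> C * norm (Q^j) ^ n * norm Q ^ n" by (rule C(2)[OF norm_Qpow])
          also have "norm (Q^j) ^ n \<le> norm Q ^ j"
          proof -
            have "norm (Q^j) ^ n = (norm Q ^ j) ^ n" by (simp add: norm_power)
            also have "\<dots> \<le> (norm Q ^ j) ^ 1" using Suc rho by (intro power_decreasing) (auto simp: power_le_one)
            finally show ?thesis by simp
          qed
          then have "C * norm (Q^j) ^ n * norm Q ^ n \<le> C * norm Q ^ j * norm Q ^ n"
            by (intro mult_right_mono mult_left_mono) (use C in auto)
          finally show "norm (cK (Q^j) n * Pinf (Q^j*Q^n)) \<le> C * norm Q ^ n * norm Q ^ j" by (simp add: algebra_simps)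
        qed
        show "(\<lambda>j. C * norm Q ^ n * norm Q ^ j) \<longlonglongrightarrow> 0"
          by (intro tendsto_mult_right_zero LIMSEQ_power_zero) (use rho in simp)
      qed
      then show ?thesis using Suc by (simp add: bb_def)
    qed
  next
    show "eventually (\<lambda>(n, j). norm (cK (Q^j) n * Pinf (Q^j*Q^n)) \<le> C * norm Q ^ n) (at_top \<times>\<^sub>F sequentially)"
    proof (intro always_eventually allI, clarify)
      fix n j
      have "norm (cK (Q^j) n * Pinf (Q^j*Q^n)) \<le> C * norm (Q^j) ^ n * norm Q ^ n" by (rule C(2)[OF norm_Qpow])
      also have "\<dots> \<le> C * 1 * norm Q ^ n"
        by (intro mult_right_mono mult_left_mono) (use C rho in \<open>auto simp: norm_power power_le_one\<close>)
      finally show "norm (cK (Q^j) n * Pinf (Q^j*Q^n)) \<le> C * norm Q ^ n" by simp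
    qed
    show "summable (\<lambda>n. C * norm Q ^ n)"
      by (intro summable_mult summable_geometric) (use rho in auto)
  qed simp
  moreover have "(\<Sum>n. bb n) = 1" by (subst suminf_finite[of "{0}"]) (auto simp: bb_def)
  ultimately show ?thesis by (simp add: Kf_def)
qed

lemma Pinf_split: "Pinf 1 = (\<Prod>k<N. (1 + a*Q^k)*(1 + b*Q^k)) * Pinf (Q^N)"
proof (induction N)
  case 0 then show ?case by simp
next
  case (Suc N)
  have "Pinf (Q^N) = (1 + a*Q^N)*(1 + b*Q^N) * Pinf (Q^(Suc N))"
    using Pinf_shift_n[of 1 N] by simp
  then show ?case using Suc by (simp add: algebra_simps)
qed

lemma g3_relation:
  assumes a0: "a \<noteq> 0"
  shows "Pinf 1 * g3 (- a) Q = Kf Q"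
proof -
  have fnz: "(1 + a*Q^k)*(1 + b*Q^k) \<noteq> 0" for k
    using factor_nz[OF norm_Qpow[of k]] by (simp add: algebra_simps)
  have P1: "Pinf 1 \<noteq> 0"
    unfolding Pinf_def using prodinf_nonzero[OF Pinf_conv[of 1]] fnz by simp
  have ib: "inverse (- a) * Q = - b" using a0 ab by (simp add: field_simps)
  have pr: "qpoch (- a) Q (n+1) * qpoch (- b) Q (n+1) = (\<Prod>k<n+1. (1 + a*Q^k)*(1 + b*Q^k))" for n
    by (simp add: qpoch_def prod.distrib)
  have t: "Q^(n*(n+1)) / (qpoch (- a) Q (n+1) * qpoch (inverse (- a) * Q) Q (n+1))
      = Q^(n*(n+1)) * Pinf (Q^(Suc n)) / Pinf 1" for n
  proof -
    have pnz: "(\<Prod>k<n+1. (1 + a*Q^k)*(1 + b*Q^k)) \<noteq> 0" using fnz by simp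
    show ?thesis unfolding ib pr using Pinf_split[of "n+1"] pnz P1 by (simp add: field_simps)
  qed
  have sm: "summable (\<lambda>n. Q^(n*(n+1)) * Pinf (Q^(Suc n)))"
  proof -
    have "summable (\<lambda>n. cK Q n * Pinf (Q*Q^n))"
      by (rule summable_norm_cancel, rule term_summable) (use rho in simp)
    then show ?thesis by (simp only: Kf_term_Q)
  qed
  have "g3 (- a) Q = (\<Sum>n. Q^(n*(n+1)) * Pinf (Q^(Suc n)) / Pinf 1)"
    unfolding g3_def by (simp only: t)
  also have "\<dots> = (\<Sum>n. Q^(n*(n+1)) * Pinf (Q^(Suc n))) / Pinf 1" by (rule suminf_divide[OF sm])
  finally show ?thesis using P1 Kf_Q by simp
qed

end

definition allowed :: "nat \<Rightarrow> nat \<Rightarrow> nat \<Rightarrow> bool" where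
  "allowed d r x \<longleftrightarrow> x mod d = 0 \<or> x mod d = r \<or> x mod d = d - r"

definition gapI :: "nat \<Rightarrow> nat \<Rightarrow> nat \<Rightarrow> bool" where
  "gapI d y x \<longleftrightarrow> y + d \<le> x \<and> (d dvd x \<longrightarrow> y + d < x)"

definition Sset :: "nat \<Rightarrow> nat \<Rightarrow> nat \<Rightarrow> nat list set" where
  "Sset d r L = {ys. successively (gapI d) ys \<and> (\<forall>y\<in>set ys. allowed d r y \<and> L \<le> y)}"

definition Hf :: "nat \<Rightarrow> nat \<Rightarrow> complex \<Rightarrow> nat \<Rightarrow> complex" where
  "Hf d r q L = infsum (\<lambda>ys. q ^ sum_list ys) (Sset d r L)"

lemma succ_nth:
  fixes P :: "'a \<Rightarrow> 'a \<Rightarrow> bool"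
  shows "(\<forall>i. Suc i < length xs \<longrightarrow> P (xs!i) (xs!Suc i)) \<longleftrightarrow> successively P xs"
proof (induction xs rule: induct_list012)
  case (3 x y xs)
  show ?case
  proof
    assume h: "\<forall>i. Suc i < length (x # y # xs) \<longrightarrow> P ((x # y # xs) ! i) ((x # y # xs) ! Suc i)"
    have "P x y" using h[rule_format, of 0] by simp
    moreover have "\<forall>i. Suc i < length (y # xs) \<longrightarrow> P ((y # xs) ! i) ((y # xs) ! Suc i)"
    proof (intro allI impI)
      fix i assume "Suc i < length (y # xs)"
      then show "P ((y # xs) ! i) ((y # xs) ! Suc i)" using h[rule_format, of "Suc i"] by simp
    qed
    ultimately show "successively P (x # y # xs)" using 3 by simp
  next
    assume h: "successively P (x # y # xs)"
    then have h1: "P x y" and h2: "successively P (y # xs)" by simp_all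
    have h3: "\<forall>i. Suc i < length (y # xs) \<longrightarrow> P ((y # xs) ! i) ((y # xs) ! Suc i)" using 3 h2 by simp
    show "\<forall>i. Suc i < length (x # y # xs) \<longrightarrow> P ((x # y # xs) ! i) ((x # y # xs) ! Suc i)"
    proof (intro allI impI)
      fix i assume i: "Suc i < length (x # y # xs)"
      show "P ((x # y # xs) ! i) ((x # y # xs) ! Suc i)"
      proof (cases i)
        case 0 then show ?thesis using h1 by simp
      next
        case (Suc j) then show ?thesis using h3 i by simp
      qed
    qed
  qed
qed auto

lemma gapI_less: "0 < d \<Longrightarrow> gapI d y x \<Longrightarrow> y < x"
  unfolding gapI_def by simp

lemma succ_sorted: "0 < d \<Longrightarrow> successively (gapI d) ys \<Longrightarrow> sorted_wrt (<) ys"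
proof -
  assume d: "0 < d" and s: "successively (gapI d) ys"
  have "successively (<) ys" using s by (rule successively_mono) (use gapI_less[OF d] in auto)
  then show ?thesis by (subst successively_conv_sorted_wrt[symmetric]) (auto simp: transp_def)
qed

lemma dec_last:
  assumes d: "0 < d" and s: "successively (\<lambda>u v. gapI d v u) xs" and y: "y \<in> set xs"
  shows "last xs \<le> y"
proof -
  have "successively (gapI d) (rev xs)" using s by simp
  then have "sorted_wrt (<) (rev xs)" by (rule succ_sorted[OF d])
  then have "sorted_wrt (>) xs" by (simp add: sorted_wrt_rev)
  then show ?thesis using y
  proof (induction xs)
    case (Cons x xs)
    show ?case
    proof (cases "xs = []")
      case True then show ?thesis using Cons by simp
    next
      case False
      have lx: "last (x # xs) = last xs" using False by simp
      have "last xs \<in> set xs" using False by simp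
      then have "last xs < x" using Cons.prems(1) by simp
      moreover have "y = x \<or> y \<in> set xs" using Cons.prems(2) by simp
      ultimately show ?thesis using Cons lx by auto
    qed
  qed simp
qed

lemma valid_iff:
  assumes d: "0 < d"
  shows "valid_C_partition d r xs \<longleftrightarrow> rev xs \<in> Sset d r (Suc d)"
proof -
  have g: "(\<forall>i. Suc i < length xs \<longrightarrow> xs ! Suc i + d \<le> xs ! i \<and> (d dvd xs ! i \<longrightarrow> xs ! Suc i + d < xs ! i))
      \<longleftrightarrow> successively (\<lambda>u v. gapI d v u) xs"
    using succ_nth[of xs "\<lambda>u v. gapI d v u"] by (simp add: gapI_def)
  show ?thesis
  proof
    assume v: "valid_C_partition d r xs"
    then have s: "successively (\<lambda>u v. gapI d v u) xs" using g by (simp add: valid_C_partition_def)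
    have "\<forall>y\<in>set xs. Suc d \<le> y"
    proof
      fix y assume y: "y \<in> set xs"
      then have "xs \<noteq> []" by auto
      then have "last xs > d" using v by (simp add: valid_C_partition_def)
      moreover have "last xs \<le> y" by (rule dec_last[OF d s y])
      ultimately show "Suc d \<le> y" by simp
    qed
    then show "rev xs \<in> Sset d r (Suc d)"
      using v s by (auto simp: Sset_def valid_C_partition_def allowed_def)
  next
    assume "rev xs \<in> Sset d r (Suc d)"
    then have s: "successively (\<lambda>u v. gapI d v u) xs" and a: "\<forall>y\<in>set xs. allowed d r y \<and> Suc d \<le> y"
      by (auto simp: Sset_def)
    have "xs \<noteq> [] \<longrightarrow> last xs > d"
    proof
      assume "xs \<noteq> []"
      then have "last xs \<in> set xs" by simp
      then show "last xs > d" using a by auto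
    qed
    then show "valid_C_partition d r xs"
      using s a g by (auto simp: valid_C_partition_def allowed_def)
  qed
qed

section \<open>Summability\<close>

lemma sorted_distinct: "sorted_wrt (<) ys \<Longrightarrow> distinct (ys::nat list)"
  by (induction ys) auto

lemma sorted_sum_set: "sorted_wrt (<) ys \<Longrightarrow> sum_list ys = sum id (set (ys::nat list))"
  using sum_list_distinct_conv_sum_set[of ys id] sorted_distinct[of ys] by simp

lemma SI_bound:
  fixes \<sigma> :: real
  assumes \<sigma>: "0 \<le> \<sigma>" "\<sigma> < 1" and F: "finite F" "F \<subseteq> {ys. sorted_wrt (<) ys}"
  shows "(\<Sum>ys\<in>F. \<sigma> ^ sum_list ys) \<le> exp (1 / (1 - \<sigma>))"
proof -
  define U where "U = \<Union> (set ` F)"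
  have fU: "finite U" unfolding U_def using F by simp
  have inj: "inj_on set F"
    by (rule inj_onI) (use F in \<open>auto intro: strict_sorted_equal\<close>)
  have "(\<Sum>ys\<in>F. \<sigma> ^ sum_list ys) = (\<Sum>ys\<in>F. \<sigma> ^ sum id (set ys))"
  proof (rule sum.cong)
    fix ys assume "ys \<in> F"
    then have "sorted_wrt (<) ys" using F by auto
    then show "\<sigma> ^ sum_list ys = \<sigma> ^ sum id (set ys)" by (simp add: sorted_sum_set)
  qed simp
  also have "\<dots> = (\<Sum>A\<in>set ` F. \<sigma> ^ sum id A)"
    by (simp add: sum.reindex[OF inj])
  also have "\<dots> \<le> (\<Sum>A\<in>Pow U. \<sigma> ^ sum id A)"
    by (rule sum_mono2) (use fU \<sigma> in \<open>auto simp: U_def\<close>)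
  also have "\<dots> = (\<Sum>A\<in>Pow U. (\<Prod>k\<in>A. \<sigma> ^ k) * (\<Prod>k\<in>U-A. 1))"
    by (simp add: power_sum)
  also have "\<dots> = (\<Prod>k\<in>U. \<sigma> ^ k + 1)"
    by (rule prod_add[OF fU, symmetric])
  also have "\<dots> \<le> exp (\<Sum>k\<in>U. \<sigma> ^ k)"
    using prod_le_exp_sum[of U "\<lambda>k. \<sigma> ^ k"] \<sigma> by (simp add: add.commute)
  also have "(\<Sum>k\<in>U. \<sigma> ^ k) \<le> (\<Sum>k. \<sigma> ^ k)"
    by (rule sum_le_suminf) (use \<sigma> fU in \<open>auto intro: summable_geometric\<close>)
  also have "(\<Sum>k. \<sigma> ^ k) = 1 / (1 - \<sigma>)" using suminf_geometric[of \<sigma>] \<sigma> by simp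
  finally show ?thesis by simp
qed

lemma SI_summable:
  fixes \<sigma> :: real
  assumes \<sigma>: "0 \<le> \<sigma>" "\<sigma> < 1"
  shows "(\<lambda>ys. \<sigma> ^ sum_list ys) summable_on {ys. sorted_wrt (<) ys}"
proof (rule nonneg_bdd_above_summable_on)
  show "0 \<le> \<sigma> ^ sum_list ys" for ys using \<sigma> by simp
  show "bdd_above (sum (\<lambda>ys. \<sigma> ^ sum_list ys) ` {F. F \<subseteq> {ys. sorted_wrt (<) ys} \<and> finite F})"
    by (rule bdd_aboveI2[of _ _ "exp (1 / (1 - \<sigma>))"]) (use SI_bound[OF \<sigma>] in auto)
qed

lemma q_summable:
  fixes q :: complex
  assumes q: "norm q < 1" and A: "A \<subseteq> {ys. sorted_wrt (<) ys}"
  shows "(\<lambda>ys. q ^ sum_list ys) summable_on A"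
proof -
  have "(\<lambda>ys. norm q ^ sum_list ys) summable_on A"
    by (rule summable_on_subset_banach[OF SI_summable A]) (use q in auto)
  then have "(\<lambda>ys. norm (q ^ sum_list ys)) summable_on A" by (simp add: norm_power)
  then show ?thesis by (rule abs_summable_summable)
qed

lemma Sset_sorted: "0 < d \<Longrightarrow> Sset d r L \<subseteq> {ys. sorted_wrt (<) ys}"
  by (auto simp: Sset_def intro: succ_sorted)

section \<open>Recursion\<close>

lemma Sset_skip:
  assumes "\<not> allowed d r L"
  shows "Sset d r L = Sset d r (Suc L)"
proof -
  have ne: "y \<noteq> L" if "allowed d r y" for y using that assms by auto
  have "(\<forall>y\<in>set ys. allowed d r y \<and> L \<le> y) \<longleftrightarrow> (\<forall>y\<in>set ys. allowed d r y \<and> Suc L \<le> y)" for ys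
  proof
    assume h: "\<forall>y\<in>set ys. allowed d r y \<and> L \<le> y"
    show "\<forall>y\<in>set ys. allowed d r y \<and> Suc L \<le> y"
    proof
      fix y assume y: "y \<in> set ys"
      then have "allowed d r y" "L \<le> y" using h by auto
      moreover have "y \<noteq> L" using ne \<open>allowed d r y\<close> by simp
      ultimately show "allowed d r y \<and> Suc L \<le> y" by simp
    qed
  qed auto
  then show ?thesis unfolding Sset_def by simp
qed

lemma Sset_step:
  assumes d: "0 < d" and al: "allowed d r L"
  defines "L' \<equiv> L + d + (if d dvd L then 1 else 0)"
  shows "Sset d r L = Sset d r (Suc L) \<union> (Cons L) ` Sset d r L'"
    and "Sset d r (Suc L) \<inter> (Cons L) ` Sset d r L' = {}"
proof -
  have hdle: "hd zs \<le> z" if "successively (gapI d) zs" "z \<in> set zs" for zs z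
  proof (cases zs)
    case (Cons h t)
    have "sorted_wrt (<) zs" by (rule succ_sorted[OF d that(1)])
    then show ?thesis using that(2) Cons by auto
  qed (use that in simp)
  show "Sset d r L = Sset d r (Suc L) \<union> (Cons L) ` Sset d r L'"
  proof (intro equalityI subsetI)
    fix ys assume ys: "ys \<in> Sset d r L"
    then have s: "successively (gapI d) ys" and a: "\<forall>y\<in>set ys. allowed d r y \<and> L \<le> y"
      by (auto simp: Sset_def)
    show "ys \<in> Sset d r (Suc L) \<union> (Cons L) ` Sset d r L'"
    proof (cases ys)
      case Nil then show ?thesis by (simp add: Sset_def)
    next
      case (Cons y zs)
      have so: "sorted_wrt (<) ys" by (rule succ_sorted[OF d s])
      show ?thesis
      proof (cases "y = L")
        case False
        have "\<forall>z\<in>set ys. Suc L \<le> z"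
        proof
          fix z assume z: "z \<in> set ys"
          have "y \<le> z" using so z Cons by auto
          moreover have "L < y" using a Cons False by auto
          ultimately show "Suc L \<le> z" by simp
        qed
        then have "ys \<in> Sset d r (Suc L)" using s a by (auto simp: Sset_def)
        then show ?thesis by simp
      next
        case True
        have zs: "successively (gapI d) zs" using s Cons by (cases zs) (auto simp: successively_Cons)
        have "\<forall>z\<in>set zs. L' \<le> z"
        proof
          fix z assume z: "z \<in> set zs"
          then have ne: "zs \<noteq> []" by auto
          have g: "gapI d L (hd zs)" using s Cons True ne by (simp add: successively_Cons)
          have "L' \<le> hd zs"
          proof (cases "d dvd L")
            case True
            have "hd zs \<noteq> L + d"
            proof
              assume "hd zs = L + d"
              then have "d dvd hd zs" using True by simp
              then show False using g \<open>hd zs = L + d\<close> by (simp add: gapI_def)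
            qed
            then show ?thesis using g True by (simp add: gapI_def L'_def)
          next
            case False
            then show ?thesis using g by (simp add: gapI_def L'_def)
          qed
          then show "L' \<le> z" using hdle[OF zs z] by simp
        qed
        then have "zs \<in> Sset d r L'" using zs a Cons by (auto simp: Sset_def)
        then show ?thesis using Cons True by simp
      qed
    qed
  next
    fix ys assume "ys \<in> Sset d r (Suc L) \<union> (Cons L) ` Sset d r L'"
    then show "ys \<in> Sset d r L"
    proof
      assume "ys \<in> Sset d r (Suc L)" then show ?thesis by (auto simp: Sset_def)
    next
      assume "ys \<in> (Cons L) ` Sset d r L'"
      then obtain zs where ys: "ys = L # zs" and zs: "zs \<in> Sset d r L'" by auto
      have s: "successively (gapI d) zs" and a: "\<forall>z\<in>set zs. allowed d r z \<and> L' \<le> z"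
        using zs by (auto simp: Sset_def)
      have "zs = [] \<or> gapI d L (hd zs)"
      proof (cases zs)
        case (Cons h t)
        have h: "L' \<le> h" using a Cons by simp
        have "L + d \<le> h" using h by (simp add: L'_def split: if_splits)
        moreover have "d dvd h \<longrightarrow> L + d < h"
        proof
          assume dh: "d dvd h"
          show "L + d < h"
          proof (cases "d dvd L")
            case True then show ?thesis using h by (simp add: L'_def)
          next
            case False
            have "h \<noteq> L + d"
            proof
              assume "h = L + d"
              then have "d dvd L + d" using dh by simp
              then have "d dvd L" by (simp add: dvd_add_left_iff)
              then show False using False by simp
            qed
            then show ?thesis using \<open>L + d \<le> h\<close> by simp
          qed
        qed
        ultimately show ?thesis using Cons by (simp add: gapI_def)
      qed simp
      then have "successively (gapI d) ys" using s ys by (auto simp: successively_Cons)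
      moreover have "\<forall>y\<in>set ys. allowed d r y \<and> L \<le> y" using a al ys by (auto simp: L'_def)
      ultimately show ?thesis by (simp add: Sset_def)
    qed
  qed
  show "Sset d r (Suc L) \<inter> (Cons L) ` Sset d r L' = {}"
    by (auto simp: Sset_def)
qed

lemma Hf_skip: "\<not> allowed d r L \<Longrightarrow> Hf d r q L = Hf d r q (Suc L)"
  by (simp add: Hf_def Sset_skip)

lemma Hf_step:
  assumes d: "0 < d" and al: "allowed d r L" and q: "norm q < 1"
  shows "Hf d r q L = Hf d r q (Suc L) + q ^ L * Hf d r q (L + d + (if d dvd L then 1 else 0))"
proof -
  define L' where "L' = L + d + (if d dvd L then 1 else 0)"
  have eq: "Sset d r L = Sset d r (Suc L) \<union> (Cons L) ` Sset d r L'"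
    and dj: "Sset d r (Suc L) \<inter> (Cons L) ` Sset d r L' = {}"
    using Sset_step[OF d al] by (simp_all add: L'_def)
  have s1: "(\<lambda>ys. q ^ sum_list ys) summable_on Sset d r (Suc L)"
    by (rule q_summable[OF q Sset_sorted[OF d]])
  have sub: "(Cons L) ` Sset d r L' \<subseteq> Sset d r L" using eq by blast
  have s2: "(\<lambda>ys. q ^ sum_list ys) summable_on (Cons L) ` Sset d r L'"
    by (rule q_summable[OF q order.trans[OF sub Sset_sorted[OF d]]])
  have s3: "(\<lambda>ys. q ^ sum_list ys) summable_on Sset d r L'"
    by (rule q_summable[OF q Sset_sorted[OF d]])
  have "Hf d r q L = Hf d r q (Suc L) + infsum (\<lambda>ys. q ^ sum_list ys) ((Cons L) ` Sset d r L')"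
    unfolding Hf_def eq by (rule infsum_Un_disjoint[OF s1 s2 dj])
  also have "infsum (\<lambda>ys. q ^ sum_list ys) ((Cons L) ` Sset d r L') = infsum (\<lambda>zs. q ^ L * q ^ sum_list zs) (Sset d r L')"
    by (subst infsum_reindex) (auto simp: o_def power_add)
  also have "\<dots> = q ^ L * Hf d r q L'"
    unfolding Hf_def by (rule infsum_cmult_right) (use s3 in simp)
  finally show ?thesis by (simp add: L'_def)
qed

lemma Hf_skip_range:
  assumes "\<And>L. A \<le> L \<Longrightarrow> L < B \<Longrightarrow> \<not> allowed d r L" and "A \<le> B"
  shows "Hf d r q A = Hf d r q B"
  using assms(2)
proof (induction B rule: dec_induct)
  case (step n)
  then show ?case using Hf_skip[OF assms(1)[of n]] by simp
qed simp

lemma mod_lev: "t < d \<Longrightarrow> (d*j + t) mod (d::nat) = t"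
  by simp

lemma not_allowed_lev:
  assumes "t < d" "t \<noteq> 0" "t \<noteq> r" "t \<noteq> d - r"
  shows "\<not> allowed d r (d*j + t)"
  using assms by (simp add: allowed_def)

lemma allowed_lev:
  assumes "t < d" "t = 0 \<or> t = r \<or> t = d - r"
  shows "allowed d r (d*j + t)"
  using assms by (auto simp: allowed_def)

context
  fixes d r :: nat and q :: complex
  assumes d: "3 \<le> d" and r: "1 \<le> r" "2*r < d" and q: "norm q < 1"
begin

abbreviation H where "H \<equiv> Hf d r q"

lemma d0: "0 < d" using d by simp

lemma lvA: "H (d*j + 1) = H (d*j + r)"
proof (rule Hf_skip_range)
  fix L assume "d*j + 1 \<le> L" "L < d*j + r"
  moreover define t where "t = L - d*j"
  ultimately have t: "L = d*j + t" "1 \<le> t" "t < r" by auto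
  then show "\<not> allowed d r L" using not_allowed_lev[of t d r j] r by simp
qed (use r in simp)

lemma lvB: "H (d*j + r) = H (d*j + r + 1) + q^(d*j + r) * H (d*Suc j + r)"
proof -
  have al: "allowed d r (d*j + r)" by (rule allowed_lev) (use r in auto)
  have nd: "\<not> d dvd (d*j + r)"
  proof
    assume "d dvd (d*j + r)"
    then have "d dvd r" by (simp add: dvd_add_right_iff)
    then show False using r by (auto dest: dvd_imp_le)
  qed
  have e: "d*j + r + d = d*Suc j + r" by simp
  have "H (d*j + r) = H (Suc (d*j + r)) + q^(d*j + r) * H (d*j + r + d + (if d dvd (d*j + r) then 1 else 0))"
    by (rule Hf_step[OF d0 al q])
  then show ?thesis by (simp only: if_not_P[OF nd] add_0_right Suc_eq_plus1 e)
qed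

lemma lvC: "H (d*j + r + 1) = H (d*j + (d - r))"
proof (rule Hf_skip_range)
  fix L assume "d*j + r + 1 \<le> L" "L < d*j + (d - r)"
  moreover define t where "t = L - d*j"
  ultimately have t: "L = d*j + t" "r < t" "t < d - r" by auto
  then show "\<not> allowed d r L" using not_allowed_lev[of t d r j] r by simp
qed (use r in simp)

lemma lvD: "H (d*j + (d - r)) = H (d*j + (d - r) + 1) + q^(d*j + (d - r)) * H (d*Suc j + (d - r))"
proof -
  have al: "allowed d r (d*j + (d - r))" by (rule allowed_lev) (use r in auto)
  have nd: "\<not> d dvd (d*j + (d - r))"
  proof
    assume "d dvd (d*j + (d - r))"
    then have "d dvd (d - r)" by (simp add: dvd_add_right_iff)
    moreover have "0 < d - r" "d - r < d" using r by auto
    ultimately show False by (auto dest: dvd_imp_le)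
  qed
  have e: "d*j + (d - r) + d = d*Suc j + (d - r)" by simp
  have "H (d*j + (d - r)) = H (Suc (d*j + (d - r))) + q^(d*j + (d - r)) * H (d*j + (d - r) + d + (if d dvd (d*j + (d - r)) then 1 else 0))"
    by (rule Hf_step[OF d0 al q])
  then show ?thesis by (simp only: if_not_P[OF nd] add_0_right Suc_eq_plus1 e)
qed

lemma lvE: "H (d*j + (d - r) + 1) = H (d*Suc j)"
proof (rule Hf_skip_range)
  fix L assume "d*j + (d - r) + 1 \<le> L" "L < d*Suc j"
  moreover define t where "t = L - d*j"
  ultimately have t: "L = d*j + t" "d - r < t" "t < d" by auto
  then show "\<not> allowed d r L" using not_allowed_lev[of t d r j] r by simp
qed (use r in simp)

lemma lvF: "H (d*Suc j) = H (d*Suc j + 1) + q^(d*Suc j) * H (d*Suc (Suc j) + 1)"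
proof -
  have al: "allowed d r (d*Suc j)" by (simp add: allowed_def)
  have e: "d*Suc j + d + 1 = d*Suc (Suc j) + 1" by simp
  have dv: "d dvd d*Suc j" by simp
  have "H (d*Suc j) = H (Suc (d*Suc j)) + q^(d*Suc j) * H (d*Suc j + d + (if d dvd (d*Suc j) then 1 else 0))"
    by (rule Hf_step[OF d0 al q])
  moreover have "Suc (d*Suc j) = d*Suc j + 1" by simp
  ultimately show ?thesis by (simp only: if_P[OF dv] e)
qed

definition G where "G j = H (d*j + 1)"

lemma G_rec:
  "G j = (1 + (q^r + q^(d-r)) * (q^d)^j) * G (Suc j) + (q^d)^(Suc j) * (1 - (q^d)^(Suc j)) * G (Suc (Suc j))"
proof -
  define Q where "Q = q^d"
  define a where "a = q^r"
  define b where "b = q^(d-r)"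
  have ab: "a * b = Q" unfolding a_def b_def Q_def using r by (simp add: power_add[symmetric])
  have p1: "q^(d*j + r) = Q^j * a" by (simp only: Q_def a_def power_add power_mult)
  have p2: "q^(d*j + (d - r)) = Q^j * b" by (simp only: Q_def b_def power_add power_mult)
  have p3: "q^(d*Suc j) = Q^(Suc j)" by (simp only: Q_def power_mult)
  have p4: "q^(d*Suc j + r) = Q^(Suc j) * a" by (simp only: Q_def a_def power_add power_mult)
  have e1: "H (d*Suc j + r) = G (Suc j)" unfolding G_def by (rule lvA[symmetric])
  have e2: "H (d*Suc j + (d - r)) = G (Suc j) - Q^(Suc j) * a * G (Suc (Suc j))"
  proof -
    have "H (d*Suc j + (d - r)) = H (d*Suc j + r) - q^(d*Suc j + r) * H (d*Suc (Suc j) + r)"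
      using lvB[of "Suc j"] lvC[of "Suc j"] by simp
    also have "H (d*Suc j + r) = G (Suc j)" by (simp only: G_def lvA)
    also have "H (d*Suc (Suc j) + r) = G (Suc (Suc j))" by (simp only: G_def lvA)
    finally show ?thesis by (simp only: p4)
  qed
  have "G j = H (d*Suc j) + q^(d*j + (d - r)) * H (d*Suc j + (d - r)) + q^(d*j + r) * H (d*Suc j + r)"
    unfolding G_def using lvA[of j] lvB[of j] lvC[of j] lvD[of j] lvE[of j] by simp
  also have "\<dots> = G (Suc j) + Q^(Suc j) * G (Suc (Suc j)) + Q^j * b * (G (Suc j) - Q^(Suc j) * a * G (Suc (Suc j)))
     + Q^j * a * G (Suc j)"
    unfolding lvF[of j] p1 p2 p3 e1 e2 by (simp add: G_def)
  also have "\<dots> = (1 + (a + b) * Q^j) * G (Suc j) + Q^(Suc j) * (1 - Q^j * (a * b)) * G (Suc (Suc j))"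
    by (simp add: algebra_simps)
  also have "Q^j * (a * b) = Q^(Suc j)" using ab by simp
  finally show ?thesis by (simp add: Q_def a_def b_def)
qed

lemma len_le_sum: "(\<forall>y\<in>set ys. 1 \<le> y) \<Longrightarrow> length ys \<le> sum_list (ys::nat list)"
  by (induction ys) auto

lemma Hf_bound:
  assumes L: "1 \<le> L"
  defines "\<sigma> \<equiv> sqrt (norm q)"
  shows "norm (H L - 1) \<le> \<sigma> ^ L * infsum (\<lambda>ys. \<sigma> ^ sum_list ys) {ys. sorted_wrt (<) ys}"
proof -
  have \<sigma>: "0 \<le> \<sigma>" "\<sigma> < 1" using q by (auto simp: \<sigma>_def)
  have \<sigma>2: "\<sigma> ^ 2 = norm q" by (simp add: \<sigma>_def)
  define S where "S = Sset d r L"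
  define S' where "S' = S - {[]}"
  have SI: "S \<subseteq> {ys. sorted_wrt (<) ys}" unfolding S_def by (rule Sset_sorted[OF d0])
  have S'I: "S' \<subseteq> {ys. sorted_wrt (<) ys}" using SI by (auto simp: S'_def)
  have nil: "[] \<in> S" by (simp add: S_def Sset_def)
  have dec: "S = {[]} \<union> S'" using nil by (auto simp: S'_def)
  have sS': "(\<lambda>ys. q ^ sum_list ys) summable_on S'" by (rule q_summable[OF q S'I])
  have "H L = infsum (\<lambda>ys. q ^ sum_list ys) ({[]} \<union> S')" by (simp only: Hf_def S_def[symmetric] dec[symmetric])
  also have "\<dots> = 1 + infsum (\<lambda>ys. q ^ sum_list ys) S'"
    by (subst infsum_Un_disjoint) (use sS' in \<open>auto simp: S'_def\<close>)
  finally have HL: "H L - 1 = infsum (\<lambda>ys. q ^ sum_list ys) S'" by simp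
  have rS': "(\<lambda>ys. norm q ^ sum_list ys) summable_on S'"
    by (rule summable_on_subset_banach[OF SI_summable S'I]) (use q in auto)
  have sgS': "(\<lambda>ys. \<sigma> ^ sum_list ys) summable_on S'"
    by (rule summable_on_subset_banach[OF SI_summable[OF \<sigma>] S'I])
  have "norm (H L - 1) \<le> infsum (\<lambda>ys. norm (q ^ sum_list ys)) S'"
    unfolding HL by (rule norm_infsum_bound) (use rS' in \<open>simp add: norm_power\<close>)
  also have "\<dots> = infsum (\<lambda>ys. norm q ^ sum_list ys) S'" by (simp add: norm_power)
  also have "\<dots> \<le> infsum (\<lambda>ys. \<sigma> ^ L * \<sigma> ^ sum_list ys) S'"
  proof (rule infsum_mono[OF rS'])
    show "(\<lambda>ys. \<sigma> ^ L * \<sigma> ^ sum_list ys) summable_on S'"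
      by (rule summable_on_cmult_right[OF sgS'])
    fix ys assume ys: "ys \<in> S'"
    then have ne: "ys \<noteq> []" and a: "\<forall>y\<in>set ys. L \<le> y" by (auto simp: S'_def S_def Sset_def)
    have "L \<le> sum_list ys"
    proof -
      obtain y where "y \<in> set ys" using ne by (cases ys) auto
      then show ?thesis using a member_le_sum_list[of y ys] by force
    qed
    then have "L + sum_list ys \<le> 2 * sum_list ys" by simp
    then have "\<sigma> ^ (2 * sum_list ys) \<le> \<sigma> ^ (L + sum_list ys)" using \<sigma> by (intro power_decreasing) auto
    then show "norm q ^ sum_list ys \<le> \<sigma> ^ L * \<sigma> ^ sum_list ys"
      by (simp add: power_add power_mult \<sigma>2[symmetric])
  qed
  also have "\<dots> = \<sigma> ^ L * infsum (\<lambda>ys. \<sigma> ^ sum_list ys) S'"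
    by (rule infsum_cmult_right) (use sgS' in simp)
  also have "\<dots> \<le> \<sigma> ^ L * infsum (\<lambda>ys. \<sigma> ^ sum_list ys) {ys. sorted_wrt (<) ys}"
    by (intro mult_left_mono infsum_mono_neutral sgS' SI_summable[OF \<sigma>]) (use \<sigma> S'I in auto)
  finally show ?thesis .
qed

lemma G_lim: "G \<longlonglongrightarrow> 1"
proof (rule LIM_zero_cancel, rule Lim_null_comparison)
  define \<sigma> where "\<sigma> = sqrt (norm q)"
  define B where "B = infsum (\<lambda>ys. \<sigma> ^ sum_list ys) {ys. sorted_wrt (<) ys}"
  show "eventually (\<lambda>j. norm (G j - 1) \<le> \<sigma> ^ (d*j + 1) * B) sequentially"
  proof (intro always_eventually allI)
    fix j :: nat
    have "1 \<le> d*j + 1" by simp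
    from Hf_bound[OF this] show "norm (G j - 1) \<le> \<sigma> ^ (d*j + 1) * B"
      by (simp only: G_def \<sigma>_def B_def)
  qed
  have "\<sigma> < 1" "0 \<le> \<sigma>" using q by (auto simp: \<sigma>_def)
  then have "(\<lambda>L. \<sigma> ^ L * B) \<longlonglongrightarrow> 0" by (intro tendsto_mult_left_zero LIMSEQ_power_zero) auto
  moreover have "filterlim (\<lambda>j. d*j + 1) at_top sequentially"
    unfolding filterlim_at_top eventually_sequentially
  proof
    fix Z :: nat show "\<exists>N. \<forall>n\<ge>N. Z \<le> d*n + 1"
    proof (rule exI[of _ Z], intro allI impI)
      fix n assume zn: "Z \<le> n"
      have h1: "n \<le> d*n" using d0 by (cases d) auto
      have "Z \<le> d*n" using zn h1 by (rule order.trans)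
      then show "Z \<le> d*n + 1" by simp
    qed
  qed
  ultimately show "(\<lambda>j. \<sigma> ^ (d*j + 1) * B) \<longlonglongrightarrow> 0" by (rule filterlim_compose)
qed

lemma C_gen_G: "C_gen d r q = G 1"
proof -
  define S where "S = Sset d r (Suc d)"
  define Fb where "Fb n = {ys \<in> S. sum_list ys = n}" for n
  have cnt: "C_count d r n = card (Fb n)" for n
  proof -
    have "{xs. sum_list xs = n \<and> valid_C_partition d r xs} = rev ` Fb n"
    proof (intro equalityI subsetI)
      fix xs assume "xs \<in> {xs. sum_list xs = n \<and> valid_C_partition d r xs}"
      then have "rev xs \<in> Fb n" by (simp add: valid_iff[OF d0] Fb_def S_def)
      then show "xs \<in> rev ` Fb n" by (metis image_eqI rev_rev_ident)
    next
      fix xs assume "xs \<in> rev ` Fb n"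
      then show "xs \<in> {xs. sum_list xs = n \<and> valid_C_partition d r xs}"
        by (auto simp: valid_iff[OF d0] Fb_def S_def)
    qed
    then show ?thesis unfolding C_count_def by (simp add: card_image)
  qed
  have fin: "finite (Fb n)" for n
  proof (rule finite_subset[OF _ finite_lists_length_le[of "{..n}" n]])
    show "Fb n \<subseteq> {xs. set xs \<subseteq> {..n} \<and> length xs \<le> n}"
    proof
      fix ys assume "ys \<in> Fb n"
      then have s: "sum_list ys = n" and a: "\<forall>y\<in>set ys. 1 \<le> y"
        by (auto simp: Fb_def S_def Sset_def)
      have "set ys \<subseteq> {..n}" using s member_le_sum_list[of _ ys] by auto
      moreover have "length ys \<le> n" using len_le_sum[OF a] s by simp
      ultimately show "ys \<in> {xs. set xs \<subseteq> {..n} \<and> length xs \<le> n}" by simp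
    qed
  qed simp
  have hs: "((\<lambda>ys. q ^ sum_list ys) has_sum H (Suc d)) S"
    unfolding Hf_def S_def by (rule has_sum_infsum, rule q_summable[OF q Sset_sorted[OF d0]])
  define h where "h ys = (sum_list ys, ys)" for ys :: "nat list"
  have inj: "inj_on h S" by (simp add: inj_on_def h_def)
  have img: "h ` S = Sigma UNIV Fb" by (auto simp: h_def Fb_def image_iff)
  have hs2: "((\<lambda>(n, ys). q ^ n) has_sum H (Suc d)) (Sigma UNIV Fb)"
    unfolding img[symmetric] has_sum_reindex[OF inj] using hs by (simp add: o_def h_def)
  have "((\<lambda>n. of_nat (card (Fb n)) * q ^ n) has_sum H (Suc d)) UNIV"
  proof (rule has_sum_SigmaD[OF hs2])
    fix n :: nat
    show "((\<lambda>y. (\<lambda>(n, ys). q ^ n) (n, y)) has_sum of_nat (card (Fb n)) * q ^ n) (Fb n)"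
      using has_sum_finite[OF fin[of n], of "\<lambda>_. q ^ n"] by simp
  qed
  then have "(\<lambda>n. of_nat (card (Fb n)) * q ^ n) sums H (Suc d)" by (rule has_sum_imp_sums)
  then have "C_gen d r q = H (Suc d)" by (simp add: C_gen_def cnt sums_iff)
  then show ?thesis by (simp add: G_def)
qed

end

lemma rec_unique:
  fixes D A B :: "nat \<Rightarrow> complex" and \<rho> C :: real
  assumes rec: "\<And>j. D j = A j * D (Suc j) + B j * D (Suc (Suc j))"
    and bnd: "\<And>j. norm (A j) + norm (B j) \<le> 1 + C * \<rho> ^ j"
    and \<rho>: "0 \<le> \<rho>" "\<rho> < 1" and C: "0 \<le> C"
    and lim: "D \<longlonglongrightarrow> 0"
  shows "D j = 0"
proof -
  define M where "M j = max (norm (D j)) (norm (D (Suc j)))" for j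
  have M0: "0 \<le> M j" for j unfolding M_def by (rule order.trans[OF norm_ge_zero max.cobounded1])
  have step: "M j \<le> (1 + C * \<rho> ^ j) * M (Suc j)" for j
  proof -
    have c1: "1 \<le> 1 + C * \<rho> ^ j" using C \<rho> by simp
    have "norm (D j) \<le> norm (A j) * norm (D (Suc j)) + norm (B j) * norm (D (Suc (Suc j)))"
      using rec[of j] by (metis norm_mult norm_triangle_ineq)
    also have "\<dots> \<le> norm (A j) * M (Suc j) + norm (B j) * M (Suc j)"
      by (intro add_mono mult_left_mono) (auto simp: M_def)
    also have "\<dots> = (norm (A j) + norm (B j)) * M (Suc j)" by (simp add: algebra_simps)
    also have "\<dots> \<le> (1 + C * \<rho> ^ j) * M (Suc j)" by (intro mult_right_mono bnd M0)
    finally have h1: "norm (D j) \<le> (1 + C * \<rho> ^ j) * M (Suc j)" .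
    have "norm (D (Suc j)) \<le> M (Suc j)" by (simp add: M_def)
    also have "\<dots> \<le> (1 + C * \<rho> ^ j) * M (Suc j)" using c1 M0[of "Suc j"] by (simp add: mult_le_cancel_right1)
    finally have h2: "norm (D (Suc j)) \<le> (1 + C * \<rho> ^ j) * M (Suc j)" .
    show ?thesis using h1 h2 by (simp add: M_def)
  qed
  define E where "E = exp (C / (1 - \<rho>))"
  have iter: "M j \<le> (\<Prod>i<k. 1 + C * \<rho> ^ (j + i)) * M (j + k)" for k
  proof (induction k)
    case 0 then show ?case by simp
  next
    case (Suc k)
    have "(\<Prod>i<k. 1 + C * \<rho> ^ (j + i)) * M (j + k) \<le> (\<Prod>i<k. 1 + C * \<rho> ^ (j + i)) * ((1 + C * \<rho> ^ (j + k)) * M (Suc (j + k)))"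
      by (intro mult_left_mono step prod_nonneg) (use C \<rho> in auto)
    then show ?case using Suc by (simp add: algebra_simps)
  qed
  have prodE: "(\<Prod>i<k. 1 + C * \<rho> ^ (j + i)) \<le> E" for k
  proof -
    have "(\<Prod>i<k. 1 + C * \<rho> ^ (j + i)) \<le> exp (\<Sum>i<k. C * \<rho> ^ (j + i))"
      by (rule prod_le_exp_sum) (use C \<rho> in auto)
    also have "(\<Sum>i<k. C * \<rho> ^ (j + i)) \<le> (\<Sum>i<k. C * \<rho> ^ i)"
      by (intro sum_mono mult_left_mono power_decreasing) (use C \<rho> in auto)
    also have "\<dots> \<le> (\<Sum>i. C * \<rho> ^ i)"
      by (intro sum_le_suminf summable_mult summable_geometric) (use C \<rho> in auto)
    also have "\<dots> = C / (1 - \<rho>)" using suminf_geometric[of \<rho>] \<rho> by (simp add: suminf_mult divide_simps)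
    finally show ?thesis unfolding E_def by simp
  qed
  have bound: "M j \<le> E * M (j + k)" for k
    using iter[of k] prodE[of k] M0[of "j + k"] by (meson mult_right_mono order.trans)
  have Mlim: "(\<lambda>k. E * M (j + k)) \<longlonglongrightarrow> 0"
  proof -
    have "(\<lambda>n. norm (D n)) \<longlonglongrightarrow> 0" using tendsto_norm[OF lim] by simp
    then have "(\<lambda>n. M n) \<longlonglongrightarrow> max 0 0"
      unfolding M_def by (intro tendsto_max) (auto intro: filterlim_compose[OF _ fl_add[of 1], simplified])
    then have "(\<lambda>k. M (k + j)) \<longlonglongrightarrow> 0" using seq_comp[OF _ fl_add[of j]] by simp
    then show ?thesis by (intro tendsto_mult_right_zero) (simp add: add.commute)
  qed
  have "M j \<le> 0" by (rule LIMSEQ_le_const[OF Mlim]) (use bound in auto)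
  then have "norm (D j) \<le> 0" by (simp add: M_def)
  then show ?thesis by simp
qed

lemma nq_pow: "norm (q::complex) < 1 \<Longrightarrow> 0 < n \<Longrightarrow> norm (q ^ n) < 1"
  by (cases n) (use pw_lt1[of "norm q"] in \<open>auto simp: norm_power norm_mult\<close>)

lemma theta_eta:
  assumes tau: "Im \<tau> > 0" and r: "1 \<le> r" "r < d"
  shows "- qpow \<tau> (- real d / 12 + real r / 2) * jtheta (1/2 + of_nat r * \<tau>) (of_nat d * \<tau>) / dedekind_eta (of_nat d * \<tau>)
    = qset.Pinf (qpow \<tau> 1 ^ r) (qpow \<tau> 1 ^ (d - r)) (qpow \<tau> 1 ^ d) 1"
proof -
  define q where "q = qpow \<tau> 1"
  define Q where "Q = q ^ d"
  define a where "a = q ^ r"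
  define b where "b = q ^ (d - r)"
  have nq: "norm q < 1" unfolding q_def using qpow_norm[OF tau, of 1] by simp
  have q0: "q \<noteq> 0" by (simp add: q_def qpow_nz)
  have nQ: "norm Q < 1" unfolding Q_def by (rule nq_pow[OF nq]) (use r in simp)
  have na: "norm a < 1" unfolding a_def by (rule nq_pow[OF nq]) (use r in simp)
  have nb: "norm b < 1" unfolding b_def by (rule nq_pow[OF nq]) (use r in simp)
  have Q0: "Q \<noteq> 0" using q0 by (simp add: Q_def)
  have a0: "a \<noteq> 0" using q0 by (simp add: a_def)
  have ab: "a * b = Q" unfolding a_def b_def Q_def using r by (simp add: power_add[symmetric])
  have Qe: "exp (2 * of_real pi * \<i> * of_nat d * \<tau>) = Q"
    unfolding Q_def q_def qpow_nat by (simp add: qpow_def)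
  have ae: "exp (2 * of_real pi * \<i> * of_nat r * \<tau>) = a"
    unfolding a_def q_def qpow_nat by (simp add: qpow_def)
  define c where "c = qpow \<tau> (real d/8 + real r/2)"
  define f where "f m = (let n = (of_int m + 1/2 :: complex) in
      exp (of_real pi * \<i> * n^2 * (of_nat d * \<tau>) + 2 * of_real pi * \<i> * n * ((1/2 + of_nat r * \<tau>) + 1/2)))" for m :: int
  have jt: "jtheta (1/2 + of_nat r * \<tau>) (of_nat d * \<tau>) = infsum f UNIV"
    unfolding jtheta_def f_def ..
  have t1: "f m = - c * (exp (2 * of_real pi * \<i> * of_nat d * \<tau> * (of_int m * (of_int m + 1) / 2)) * exp (2 * of_real pi * \<i> * of_nat r * \<tau> * of_int m))" for m
    unfolding f_def Let_def c_def by (subst theta_term) (simp only: mult.assoc)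
  have fpos: "f (int k) = - c * (Q ^ tr (Suc k) * a ^ k)" for k
    unfolding t1 theta_term_pos Qe ae ..
  have fneg: "f (- int k - 1) = - c * (Q ^ tr (Suc k) * inverse a ^ Suc k)" for k
    unfolding t1 theta_term_neg Qe ae ..
  have s1: "summable (\<lambda>k. norm (Q ^ tr (Suc k) * a ^ k))" by (rule jtp_summable1[OF nQ])
  have s2: "summable (\<lambda>k. norm (Q ^ tr (Suc k) * inverse a ^ Suc k))" by (rule jtp_summable2[OF nQ])
  have "infsum f UNIV = (\<Sum>k. f (int k)) + (\<Sum>k. f (- int k - 1))"
  proof (rule infsum_int_split)
    show "summable (\<lambda>k. norm (f (int k)))" unfolding fpos
      using summable_mult[OF s1, of "norm (- c)"] by (simp add: norm_mult)
    show "summable (\<lambda>k. norm (f (- int k - 1)))" unfolding fneg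
      using summable_mult[OF s2, of "norm (- c)"] by (simp add: norm_mult)
  qed
  also have "\<dots> = - c * ((\<Sum>k. Q ^ tr (Suc k) * a ^ k) + (\<Sum>k. Q ^ tr (Suc k) * inverse a ^ Suc k))"
    unfolding fpos fneg
    using suminf_mult[OF summable_norm_cancel[OF s1], of "- c"] suminf_mult[OF summable_norm_cancel[OF s2], of "- c"]
    by (simp add: algebra_simps)
  also have "(\<Sum>k. Q ^ tr (Suc k) * a ^ k) + (\<Sum>k. Q ^ tr (Suc k) * inverse a ^ Suc k)
      = qinf Q * ((\<Prod>t. 1 + a*Q^(Suc t)) * (\<Prod>s. 1 + inverse a * Q^s))"
    by (rule jtp[OF nQ Q0 a0, symmetric])
  finally have jt2: "jtheta (1/2 + of_nat r * \<tau>) (of_nat d * \<tau>) = - c * (qinf Q * ((\<Prod>t. 1 + a*Q^(Suc t)) * (\<Prod>s. 1 + inverse a * Q^s)))"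
    using jt by simp
  have pr: "a * ((\<Prod>t. 1 + a*Q^(Suc t)) * (\<Prod>s. 1 + inverse a * Q^s)) = qset.Pinf a b Q 1"
  proof -
    interpret qset a b Q by unfold_locales (rule nQ na nb ab)+
    show ?thesis using prod_relation[OF nQ na a0 nb ab] by (simp add: Pinf_def)
  qed
  have eta: "dedekind_eta (of_nat d * \<tau>) = qpow \<tau> (real d / 24) * qinf Q"
  proof -
    have "qpow (of_nat d * \<tau>) 1 = Q" unfolding Q_def q_def qpow_nat qpow_scale by simp
    moreover have "qpow (of_nat d * \<tau>) (1/24) = qpow \<tau> (real d / 24)" unfolding qpow_scale by simp
    ultimately show ?thesis unfolding dedekind_eta_def qinf_def by simp
  qed
  have ce: "qpow \<tau> (- real d / 12 + real r / 2) * c = a * qpow \<tau> (real d / 24)"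
  proof -
    have "qpow \<tau> (- real d / 12 + real r / 2) * c = qpow \<tau> (real r + real d / 24)"
      unfolding c_def qpow_add by (rule arg_cong[where f = "qpow \<tau>"]) (simp add: field_simps)
    also have "\<dots> = a * qpow \<tau> (real d / 24)"
      unfolding a_def q_def qpow_nat qpow_add ..
    finally show ?thesis .
  qed
  have qi: "qinf Q \<noteq> 0" by (rule qinf_nz[OF nQ])
  have qn: "qpow \<tau> (real d / 24) \<noteq> 0" by (rule qpow_nz)
  have "- qpow \<tau> (- real d / 12 + real r / 2) * jtheta (1/2 + of_nat r * \<tau>) (of_nat d * \<tau>) / dedekind_eta (of_nat d * \<tau>)
      = (qpow \<tau> (- real d / 12 + real r / 2) * c) * (qinf Q * ((\<Prod>t. 1 + a*Q^(Suc t)) * (\<Prod>s. 1 + inverse a * Q^s))) / (qpow \<tau> (real d / 24) * qinf Q)"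
    unfolding jt2 eta by (simp add: algebra_simps)
  also have "\<dots> = a * ((\<Prod>t. 1 + a*Q^(Suc t)) * (\<Prod>s. 1 + inverse a * Q^s))"
    unfolding ce using qi qn by (simp add: field_simps)
  also have "\<dots> = qset.Pinf a b Q 1" by (rule pr)
  finally show ?thesis by (simp add: a_def b_def Q_def q_def)
qed


theorem theorem1p2:
  fixes d r :: nat and \<tau> :: complex
  assumes "d \<ge> 3" and "1 \<le> r" and "2 * r < d" and "Im \<tau> > 0"
  shows "C_gen d r (qpow \<tau> 1) =
    - qpow \<tau> (- real d / 12 + real r / 2)
      * jtheta (1/2 + of_nat r * \<tau>) (of_nat d * \<tau>) / dedekind_eta (of_nat d * \<tau>)
      * g3 (- (qpow \<tau> 1 ^ r)) (qpow \<tau> 1 ^ d)"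
proof -
  define q where "q = qpow \<tau> 1"
  define Q where "Q = q ^ d"
  define a where "a = q ^ r"
  define b where "b = q ^ (d - r)"
  have rd: "r < d" using assms by simp
  have nq: "norm q < 1" unfolding q_def using qpow_norm[OF assms(4), of 1] by simp
  have q0: "q \<noteq> 0" by (simp add: q_def qpow_nz)
  have nQ: "norm Q < 1" unfolding Q_def by (rule nq_pow[OF nq]) (use assms in simp)
  have na: "norm a < 1" unfolding a_def by (rule nq_pow[OF nq]) (use assms in simp)
  have nb: "norm b < 1" unfolding b_def by (rule nq_pow[OF nq]) (use rd in simp)
  have a0: "a \<noteq> 0" using q0 by (simp add: a_def)
  have ab: "a * b = Q" unfolding a_def b_def Q_def using rd by (simp add: power_add[symmetric])
  interpret qset a b Q by unfold_locales (rule nQ na nb ab)+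
  have Gr: "G d r q j = (1 + (a+b)*Q^j) * G d r q (Suc j) + Q^(Suc j)*(1 - Q^(Suc j)) * G d r q (Suc (Suc j))" for j
    using G_rec[OF assms(1-3) nq, of j] by (simp only: Q_def a_def b_def)
  define D where "D j = G d r q j - Kf (Q^j)" for j
  define A where "A j = 1 + (a+b)*Q^j" for j
  define B where "B j = Q^(Suc j)*(1 - Q^(Suc j))" for j
  have rec: "D j = A j * D (Suc j) + B j * D (Suc (Suc j))" for j
  proof -
    have "D j = ((1 + (a+b)*Q^j) * G d r q (Suc j) + Q^(Suc j)*(1 - Q^(Suc j)) * G d r q (Suc (Suc j)))
       - ((1 + (a+b)*Q^j) * Kf (Q^(Suc j)) + Q^(Suc j) * (1 - Q^(Suc j)) * Kf (Q^(Suc (Suc j))))"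
      unfolding D_def by (subst Gr[of j], subst Kf_rec[of j], rule refl)
    then show ?thesis unfolding D_def A_def B_def by (simp add: algebra_simps)
  qed
  have bnd: "norm (A j) + norm (B j) \<le> 1 + (norm a + norm b + 2) * norm Q ^ j" for j
  proof -
    have "norm (A j) \<le> 1 + norm ((a+b)*Q^j)" unfolding A_def by (metis norm_one norm_triangle_ineq)
    also have "norm ((a+b)*Q^j) \<le> (norm a + norm b) * norm Q ^ j"
      by (simp add: norm_mult norm_power mult_right_mono norm_triangle_ineq)
    finally have hA: "norm (A j) \<le> 1 + (norm a + norm b) * norm Q ^ j" by simp
    have hQ: "norm Q ^ Suc j \<le> norm Q ^ j" using nQ by (intro power_decreasing) auto
    have "norm (1 - Q^(Suc j)) \<le> 1 + norm (Q^(Suc j))" by (metis norm_one norm_triangle_ineq4)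
    also have "norm (Q^(Suc j)) \<le> 1" unfolding norm_power by (rule power_le_one) (use nQ in auto)
    finally have h1: "norm (1 - Q^(Suc j)) \<le> 2" by simp
    have "norm (B j) = norm Q ^ Suc j * norm (1 - Q^(Suc j))" unfolding B_def by (simp add: norm_mult norm_power)
    also have "\<dots> \<le> norm Q ^ j * 2" by (intro mult_mono hQ h1) auto
    finally have hB: "norm (B j) \<le> 2 * norm Q ^ j" by simp
    show ?thesis using hA hB by (simp add: algebra_simps)
  qed
  have lim: "D \<longlonglongrightarrow> 0"
  proof -
    have "(\<lambda>j. G d r q j - Kf (Q^j)) \<longlonglongrightarrow> 1 - 1"
      by (intro tendsto_diff G_lim[OF assms(1-3) nq] Kf_lim)
    then show ?thesis by (simp add: D_def[abs_def])
  qed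
  have "D 1 = 0"
    by (rule rec_unique[OF rec bnd _ _ _ lim]) (use nQ in auto)
  then have GK: "G d r q 1 = Kf Q" by (simp add: D_def)
  have "C_gen d r (qpow \<tau> 1) = Kf Q" using C_gen_G[OF assms(1-3) nq] GK by (simp add: q_def)
  also have "\<dots> = Pinf 1 * g3 (- a) Q" by (rule g3_relation[OF a0, symmetric])
  also have "Pinf 1 = - qpow \<tau> (- real d / 12 + real r / 2)
      * jtheta (1/2 + of_nat r * \<tau>) (of_nat d * \<tau>) / dedekind_eta (of_nat d * \<tau>)"
    using theta_eta[OF assms(4) assms(2) rd] by (simp add: a_def b_def Q_def q_def)
  finally show ?thesis by (simp add: a_def Q_def q_def)
qed

end
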